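(* Let $n\ge2$ and let $Q$ be the equioriented cyclic quiver with vertex set $\mathbb Z/n\mathbb Z$ and edges $i\to i-1$. Let $\mathfrak n_Q$ be the Lie algebra of primitive elements of the Hall algebra $\mathbf H_Q$ of nilpotent representations of $Q$ over $\mathbb{F}_1$. Then $\mathfrak n_Q$ is isomorphic as a Lie algebra to $\mathfrak a_+=t\,\mathfrak{gl}_n[t]\oplus N_+\subset\widehat{\mathfrak{gl}}_n$; the isomorphism (to the opposite Lie algebra $\mathfrak n_Q^{op}$) sends the basis $\{E_{r,s}\otimes t^m\}$ of $\mathfrak a_+$ bijectively onto the basis of $\mathfrak n_Q$ given by the classes of indecomposable nilpotent representations. *)

theory Defs
  imports Complex_Main
begin

text \<open>An F_1-representation of the equioriented cyclic quiver with vertices Z/nZ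
  (encoded as 0..n-1) and arrows i -> i-1 is given by the finite set of nonzero
  elements (the pointed sets with basepoint removed), a vertex (degree) for each
  element, and the arrow maps, which are F_1-linear, i.e. partial injective maps
  (an element sent to the basepoint is encoded by None).\<close>

record qrep =
  rcar :: "nat set"
  rdeg :: "nat \<Rightarrow> nat"
  rarr :: "nat \<Rightarrow> nat option"

definition arr_step :: "qrep \<Rightarrow> nat option \<Rightarrow> nat option" where
  "arr_step R o' = Option.bind o' (rarr R)"

definition nilpotent_rep :: "qrep \<Rightarrow> bool" where
  "nilpotent_rep R \<longleftrightarrow> (\<exists>k. \<forall>x\<in>rcar R. (arr_step R ^^ k) (Some x) = None)"

definition wf_rep :: "nat \<Rightarrow> qrep \<Rightarrow> bool" where
  "wf_rep n R \<longleftrightarrow>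
     finite (rcar R) \<and>
     (\<forall>x\<in>rcar R. rdeg R x < n) \<and>
     (\<forall>x\<in>rcar R. \<forall>y. rarr R x = Some y \<longrightarrow>
          y \<in> rcar R \<and> rdeg R y = (rdeg R x + n - 1) mod n) \<and>
     (\<forall>x\<in>rcar R. \<forall>y\<in>rcar R. rarr R x \<noteq> None \<and> rarr R x = rarr R y \<longrightarrow> x = y) \<and>
     nilpotent_rep R"

definition iso_rep :: "qrep \<Rightarrow> qrep \<Rightarrow> bool" where
  "iso_rep R S \<longleftrightarrow> (\<exists>h. bij_betw h (rcar R) (rcar S) \<and>
      (\<forall>x\<in>rcar R. rdeg S (h x) = rdeg R x \<and> rarr S (h x) = map_option h (rarr R x)))"

definition cls :: "nat \<Rightarrow> qrep \<Rightarrow> qrep set" where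
  "cls n R = {S. wf_rep n S \<and> iso_rep S R}"

definition isoclasses :: "nat \<Rightarrow> qrep set set" where
  "isoclasses n = {cls n R | R. wf_rep n R}"

definition rep_of :: "qrep set \<Rightarrow> qrep" where
  "rep_of C = (SOME R. R \<in> C)"

definition zero_rep :: qrep where
  "zero_rep = \<lparr>rcar = {}, rdeg = (\<lambda>_. 0), rarr = (\<lambda>_. None)\<rparr>"

definition subreps :: "qrep \<Rightarrow> nat set set" where
  "subreps R = {A. A \<subseteq> rcar R \<and> (\<forall>x\<in>A. \<forall>y. rarr R x = Some y \<longrightarrow> y \<in> A)}"

definition restr :: "qrep \<Rightarrow> nat set \<Rightarrow> qrep" where
  "restr R A = R\<lparr>rcar := A\<rparr>"

definition quot :: "qrep \<Rightarrow> nat set \<Rightarrow> qrep" where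
  "quot R A = R\<lparr>rcar := rcar R - A,
     rarr := (\<lambda>x. case rarr R x of None \<Rightarrow> None | Some y \<Rightarrow> if y \<in> A then None else Some y)\<rparr>"

definition decomps :: "qrep \<Rightarrow> (nat set \<times> nat set) set" where
  "decomps R = {(A, B). A \<in> subreps R \<and> B \<in> subreps R \<and> A \<inter> B = {} \<and> A \<union> B = rcar R}"

definition indecomposable :: "nat \<Rightarrow> qrep \<Rightarrow> bool" where
  "indecomposable n R \<longleftrightarrow> wf_rep n R \<and> rcar R \<noteq> {} \<and>
     (\<forall>(A, B)\<in>decomps R. A = {} \<or> B = {})"

definition hall :: "nat \<Rightarrow> (qrep set \<Rightarrow> complex) set" where
  "hall n = {h. finite {C. h C \<noteq> 0} \<and> (\<forall>C. h C \<noteq> 0 \<longrightarrow> C \<in> isoclasses n)}"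

definition delta :: "qrep set \<Rightarrow> qrep set \<Rightarrow> complex" where
  "delta C = (\<lambda>D. if D = C then 1 else 0)"

definition hone :: "nat \<Rightarrow> qrep set \<Rightarrow> complex" where
  "hone n = delta (cls n zero_rep)"

text \<open>Product: [M]*[N] = sum_R #{L subrep of R. L ~ N, R/L ~ M} [R].\<close>
definition hmul :: "nat \<Rightarrow> (qrep set \<Rightarrow> complex) \<Rightarrow> (qrep set \<Rightarrow> complex) \<Rightarrow> qrep set \<Rightarrow> complex" where
  "hmul n a b = (\<lambda>C. if C \<in> isoclasses n then
      (\<Sum>A\<in>subreps (rep_of C). b (cls n (restr (rep_of C) A)) * a (cls n (quot (rep_of C) A)))
      else 0)"

text \<open>Coproduct: Delta [M] = sum over decompositions M = M' (+) M'' of [M'] (x) [M''];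
  elements of H (x) H are finitely supported functions on pairs of classes.\<close>
definition hcomul :: "nat \<Rightarrow> (qrep set \<Rightarrow> complex) \<Rightarrow> qrep set \<times> qrep set \<Rightarrow> complex" where
  "hcomul n x = (\<lambda>(C1, C2). \<Sum>C\<in>{C. x C \<noteq> 0}. x C *
      of_nat (card {(A, B) \<in> decomps (rep_of C).
                     cls n (restr (rep_of C) A) = C1 \<and> cls n (restr (rep_of C) B) = C2}))"

definition primitive :: "nat \<Rightarrow> (qrep set \<Rightarrow> complex) \<Rightarrow> bool" where
  "primitive n x \<longleftrightarrow> x \<in> hall n \<and>
     hcomul n x = (\<lambda>(C1, C2). x C1 * hone n C2 + hone n C1 * x C2)"

definition nQ :: "nat \<Rightarrow> (qrep set \<Rightarrow> complex) set" where
  "nQ n = {x. primitive n x}"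

definition hbr :: "nat \<Rightarrow> (qrep set \<Rightarrow> complex) \<Rightarrow> (qrep set \<Rightarrow> complex) \<Rightarrow> qrep set \<Rightarrow> complex" where
  "hbr n x y = (\<lambda>C. hmul n x y C - hmul n y x C)"

text \<open>An element is a finite sum sum_m A_m t^m with A_m in gl_n(C), encoded as
  x m r s = (r,s) entry of A_m (indices 0..n-1), with A_0 strictly upper triangular.
  The 2-cocycle of the central extension vanishes on nonnegative powers of t,
  so the bracket inside the affine algebra is the loop commutator.\<close>
definition aplus :: "nat \<Rightarrow> (nat \<Rightarrow> nat \<Rightarrow> nat \<Rightarrow> complex) set" where
  "aplus n = {x. finite {m. \<exists>r s. x m r s \<noteq> 0} \<and>
      (\<forall>m r s. x m r s \<noteq> 0 \<longrightarrow> r < n \<and> s < n \<and> (1 \<le> m \<or> r < s))}"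

definition abr :: "nat \<Rightarrow> (nat \<Rightarrow> nat \<Rightarrow> nat \<Rightarrow> complex) \<Rightarrow> (nat \<Rightarrow> nat \<Rightarrow> nat \<Rightarrow> complex)
                    \<Rightarrow> nat \<Rightarrow> nat \<Rightarrow> nat \<Rightarrow> complex" where
  "abr n x y = (\<lambda>m r s. \<Sum>a\<le>m. \<Sum>k<n. x a r k * y (m - a) k s - y (m - a) r k * x a k s)"

definition Ebasis :: "nat \<Rightarrow> nat \<Rightarrow> nat \<Rightarrow> nat \<Rightarrow> nat \<Rightarrow> nat \<Rightarrow> complex" where
  "Ebasis r s m = (\<lambda>m' r' s'. if m' = m \<and> r' = r \<and> s' = s then 1 else 0)"

definition aplus_basis :: "nat \<Rightarrow> (nat \<Rightarrow> nat \<Rightarrow> nat \<Rightarrow> complex) set" where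
  "aplus_basis n = {Ebasis r s m | r s m. r < n \<and> s < n \<and> (1 \<le> m \<or> r < s)}"

definition indec_basis :: "nat \<Rightarrow> (qrep set \<Rightarrow> complex) set" where
  "indec_basis n = {delta (cls n R) | R. indecomposable n R}"

end

theory Submission
  imports Defs
begin


lemma arr_step_None[simp]: "arr_step R None = None"
  by (simp add: arr_step_def)
lemma arr_step_Some[simp]: "arr_step R (Some x) = rarr R x"
  by (simp add: arr_step_def)

lemma funpow_None[simp]: "(arr_step R ^^ k) None = None"
  by (induction k) auto

definition chain :: "nat \<Rightarrow> nat \<Rightarrow> nat \<Rightarrow> qrep" where
  "chain n d l = \<lparr>rcar = {..<l}, rdeg = (\<lambda>j. (d + j) mod n),
     rarr = (\<lambda>j. if j = 0 then None else Some (j - 1))\<rparr>"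

lemma rcar_chain[simp]: "rcar (chain n d l) = {..<l}" by (simp add: chain_def)
lemma rdeg_chain[simp]: "rdeg (chain n d l) j = (d + j) mod n" by (simp add: chain_def)
lemma rarr_chain[simp]: "rarr (chain n d l) j = (if j = 0 then None else Some (j - 1))" by (simp add: chain_def)

lemma iter_chain: "(arr_step (chain n d l) ^^ k) (Some j) = (if k \<le> j then Some (j - k) else None)"
  by (induction k) auto

lemma mod_pred_aux: "(n::nat) \<ge> 1 \<Longrightarrow> X \<ge> 1 \<Longrightarrow> (X - 1) mod n = (X mod n + n - 1) mod n"
proof -
  assume "n \<ge> 1" "X \<ge> 1"
  have "(X mod n + n - 1) mod n = (X mod n + (n - 1)) mod n" using \<open>n\<ge>1\<close> by simp
  also have "\<dots> = (X + (n - 1)) mod n" by (simp add: mod_add_left_eq)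
  also have "X + (n - 1) = (X - 1) + n" using \<open>n\<ge>1\<close> \<open>X\<ge>1\<close> by simp
  finally show ?thesis by simp
qed

lemma wf_chain: assumes n: "n \<ge> 1" shows "wf_rep n (chain n d l)"
  unfolding wf_rep_def nilpotent_rep_def
proof (intro conjI)
  show "\<forall>x\<in>rcar (chain n d l). \<forall>y. rarr (chain n d l) x = Some y \<longrightarrow>
        y \<in> rcar (chain n d l) \<and> rdeg (chain n d l) y = (rdeg (chain n d l) x + n - 1) mod n"
    using mod_pred_aux[OF n, of "d + _"] by (auto)
  show "\<exists>k. \<forall>x\<in>rcar (chain n d l). (arr_step (chain n d l) ^^ k) (Some x) = None"
    by (rule exI[of _ l]) (auto simp: iter_chain)
qed (use n in \<open>auto\<close>)



lemma iso_refl: "iso_rep R R"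
  unfolding iso_rep_def by (rule exI[of _ id]) (auto simp: option.map_id)

lemma wf_arr: "wf_rep n R \<Longrightarrow> x \<in> rcar R \<Longrightarrow> rarr R x = Some y \<Longrightarrow> y \<in> rcar R"
  unfolding wf_rep_def by blast

lemma iso_sym: assumes "wf_rep n R" "iso_rep R S" shows "iso_rep S R"
proof -
  obtain h where h: "bij_betw h (rcar R) (rcar S)"
    "\<forall>x\<in>rcar R. rdeg S (h x) = rdeg R x \<and> rarr S (h x) = map_option h (rarr R x)"
    using assms(2) unfolding iso_rep_def by blast
  define g where "g = inv_into (rcar R) h"
  have g: "bij_betw g (rcar S) (rcar R)" using h(1) bij_betw_inv_into g_def by blast
  have gh: "\<And>x. x \<in> rcar R \<Longrightarrow> g (h x) = x" using h(1) g_def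
    by (simp add: bij_betw_def)
  have hg: "\<And>y. y \<in> rcar S \<Longrightarrow> h (g y) = y" using h(1) g_def
    by (simp add: bij_betw_def f_inv_into_f)
  have "\<forall>y\<in>rcar S. rdeg R (g y) = rdeg S y \<and> rarr R (g y) = map_option g (rarr S y)"
  proof
    fix y assume y: "y \<in> rcar S"
    have gy: "g y \<in> rcar R" by (rule bij_betw_apply[OF g y])
    have "rdeg R (g y) = rdeg S y" using h(2) gy hg[OF y] by metis
    moreover have "rarr R (g y) = map_option g (rarr S y)"
    proof (cases "rarr R (g y)")
      case None
      then show ?thesis using h(2) gy hg[OF y] by (metis option.map_disc_iff)
    next
      case (Some z)
      have z: "z \<in> rcar R" using wf_arr[OF assms(1) gy Some] .
      have "rarr S y = Some (h z)" using h(2) gy hg[OF y] Some by (metis option.simps(9))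
      then show ?thesis using Some gh[OF z] by simp
    qed
    ultimately show "rdeg R (g y) = rdeg S y \<and> rarr R (g y) = map_option g (rarr S y)" ..
  qed
  then show ?thesis using g unfolding iso_rep_def by blast
qed

lemma iso_trans: assumes "iso_rep R S" "iso_rep S T" shows "iso_rep R T"
proof -
  obtain h where h: "bij_betw h (rcar R) (rcar S)"
    "\<forall>x\<in>rcar R. rdeg S (h x) = rdeg R x \<and> rarr S (h x) = map_option h (rarr R x)"
    using assms(1) unfolding iso_rep_def by blast
  obtain g where g: "bij_betw g (rcar S) (rcar T)"
    "\<forall>x\<in>rcar S. rdeg T (g x) = rdeg S x \<and> rarr T (g x) = map_option g (rarr S x)"
    using assms(2) unfolding iso_rep_def by blast
  have "bij_betw (g \<circ> h) (rcar R) (rcar T)" using h(1) g(1) bij_betw_trans by blast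
  moreover have "\<forall>x\<in>rcar R. rdeg T ((g\<circ>h) x) = rdeg R x \<and> rarr T ((g\<circ>h) x) = map_option (g\<circ>h) (rarr R x)"
  proof
    fix x assume x: "x \<in> rcar R"
    have hx: "h x \<in> rcar S" by (rule bij_betw_apply[OF h(1) x])
    show "rdeg T ((g\<circ>h) x) = rdeg R x \<and> rarr T ((g\<circ>h) x) = map_option (g\<circ>h) (rarr R x)"
      using g(2) hx h(2) x by (simp add: option.map_comp)
  qed
  ultimately show ?thesis unfolding iso_rep_def by blast
qed

lemma cls_eq: assumes "wf_rep n R" "wf_rep n S"
  shows "cls n R = cls n S \<longleftrightarrow> iso_rep R S"
proof
  assume "cls n R = cls n S"
  moreover have "R \<in> cls n R" using assms iso_refl by (simp add: cls_def)
  ultimately show "iso_rep R S" by (simp add: cls_def)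
next
  assume a: "iso_rep R S"
  have b: "iso_rep S R" using iso_sym assms a by blast
  show "cls n R = cls n S" unfolding cls_def using a b iso_trans by blast
qed

lemma self_in_cls: "wf_rep n R \<Longrightarrow> R \<in> cls n R"
  by (simp add: cls_def iso_refl)

lemma rep_of_cls: assumes "C \<in> isoclasses n"
  shows "rep_of C \<in> C" "wf_rep n (rep_of C)" "C = cls n (rep_of C)"
proof -
  obtain R where R: "wf_rep n R" "C = cls n R" using assms unfolding isoclasses_def by blast
  have "R \<in> C" using R self_in_cls by blast
  then show 1: "rep_of C \<in> C" unfolding rep_of_def by (rule someI)
  then show 2: "wf_rep n (rep_of C)" using R by (simp add: cls_def)
  have "iso_rep (rep_of C) R" using 1 R by (simp add: cls_def)
  then show "C = cls n (rep_of C)" using cls_eq[OF 2 R(1)] R by simp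
qed

lemma cls_in_isoclasses: "wf_rep n R \<Longrightarrow> cls n R \<in> isoclasses n"
  unfolding isoclasses_def by blast

lemma iter_sub:
  assumes "\<And>x y. rarr Q x = Some y \<Longrightarrow> rarr R x = Some y"
  shows "(arr_step Q ^^ k) (Some x) = Some z \<Longrightarrow> (arr_step R ^^ k) (Some x) = Some z"
proof (induction k arbitrary: z)
  case 0 then show ?case by simp
next
  case (Suc k)
  then obtain w where w: "(arr_step Q ^^ k) (Some x) = Some w" "rarr Q w = Some z"
    by (cases "(arr_step Q ^^ k) (Some x)") auto
  then show ?case using Suc.IH assms by simp
qed

lemma nilp_sub:
  assumes "\<And>x y. rarr Q x = Some y \<Longrightarrow> rarr R x = Some y" "nilpotent_rep R" "rcar Q \<subseteq> rcar R"
  shows "nilpotent_rep Q"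
proof -
  obtain k where k: "\<forall>x\<in>rcar R. (arr_step R ^^ k) (Some x) = None"
    using assms(2) unfolding nilpotent_rep_def by blast
  have "\<forall>x\<in>rcar Q. (arr_step Q ^^ k) (Some x) = None"
  proof
    fix x assume "x \<in> rcar Q"
    have I: "(arr_step R ^^ k) (Some x) = Some z" if "(arr_step Q ^^ k) (Some x) = Some z" for z
      by (rule iter_sub[where Q=Q and R=R]) (use assms(1) that in auto)
    show "(arr_step Q ^^ k) (Some x) = None"
      using k assms(3) I \<open>x \<in> rcar Q\<close> by (cases "(arr_step Q ^^ k) (Some x)") auto
  qed
  then show ?thesis unfolding nilpotent_rep_def by blast
qed

lemma rcar_restr[simp]: "rcar (restr R A) = A" and rdeg_restr[simp]: "rdeg (restr R A) = rdeg R"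
  and rarr_restr[simp]: "rarr (restr R A) = rarr R"
  by (simp_all add: restr_def)

lemma rcar_quot[simp]: "rcar (quot R A) = rcar R - A" and rdeg_quot[simp]: "rdeg (quot R A) = rdeg R"
  and rarr_quot: "rarr (quot R A) x = (case rarr R x of None \<Rightarrow> None | Some y \<Rightarrow> if y \<in> A then None else Some y)"
  by (simp_all add: quot_def)

lemma rarr_quot_Some: "rarr (quot R A) x = Some y \<longleftrightarrow> rarr R x = Some y \<and> y \<notin> A"
  by (auto simp: rarr_quot split: option.splits)

lemma wf_restr: assumes "wf_rep n R" "A \<in> subreps R" shows "wf_rep n (restr R A)"
proof -
  have A: "A \<subseteq> rcar R" "\<forall>x\<in>A. \<forall>y. rarr R x = Some y \<longrightarrow> y \<in> A" using assms(2) by (auto simp: subreps_def)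
  have "nilpotent_rep (restr R A)" by (rule nilp_sub[of _ R]) (use assms(1) A in \<open>auto simp: wf_rep_def\<close>)
  moreover have "finite A" using assms(1) A(1) finite_subset unfolding wf_rep_def by blast
  moreover have "\<forall>x\<in>A. rdeg R x < n" using assms(1) A(1) unfolding wf_rep_def by blast
  moreover have "\<forall>x\<in>A. \<forall>y. rarr R x = Some y \<longrightarrow> y \<in> A \<and> rdeg R y = (rdeg R x + n - 1) mod n"
    using assms(1) A unfolding wf_rep_def by blast
  moreover have "\<forall>x\<in>A. \<forall>y\<in>A. rarr R x \<noteq> None \<and> rarr R x = rarr R y \<longrightarrow> x = y"
    using assms(1) A(1) unfolding wf_rep_def by blast
  ultimately show ?thesis unfolding wf_rep_def rcar_restr rdeg_restr rarr_restr by (intro conjI)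
qed

lemma wf_quot: assumes "wf_rep n R" "A \<in> subreps R" shows "wf_rep n (quot R A)"
proof -
  have "nilpotent_rep (quot R A)" by (rule nilp_sub[of _ R]) (use assms(1) in \<open>auto simp: wf_rep_def rarr_quot_Some\<close>)
  moreover have "\<forall>x\<in>rcar (quot R A). \<forall>y\<in>rcar (quot R A). rarr (quot R A) x \<noteq> None \<and> rarr (quot R A) x = rarr (quot R A) y \<longrightarrow> x = y"
  proof (intro ballI impI)
    fix x y assume xy: "x \<in> rcar (quot R A)" "y \<in> rcar (quot R A)" "rarr (quot R A) x \<noteq> None \<and> rarr (quot R A) x = rarr (quot R A) y"
    obtain z where z1: "rarr (quot R A) x = Some z" using xy(3) by (metis option.exhaust)
    then have "rarr (quot R A) x = Some z" "rarr (quot R A) y = Some z" using xy(3) by auto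
    then have "rarr R x = Some z" "rarr R y = Some z" by (auto simp: rarr_quot_Some)
    then show "x = y" using assms(1) xy(1,2) unfolding wf_rep_def by auto
  qed
  moreover have "finite (rcar R - A)" using assms(1) unfolding wf_rep_def by blast
  moreover have "\<forall>x\<in>rcar R - A. rdeg R x < n" using assms(1) unfolding wf_rep_def by blast
  moreover have "\<forall>x\<in>rcar R - A. \<forall>y. rarr (quot R A) x = Some y \<longrightarrow> y \<in> rcar R - A \<and> rdeg R y = (rdeg R x + n - 1) mod n"
    using assms(1) unfolding wf_rep_def rarr_quot_Some by blast
  ultimately show ?thesis unfolding wf_rep_def rcar_quot rdeg_quot by (intro conjI)
qed



definition gen :: "qrep \<Rightarrow> nat \<Rightarrow> bool" where
  "gen R t \<longleftrightarrow> t \<in> rcar R \<and> (\<forall>z\<in>rcar R. \<exists>k. (arr_step R ^^ k) (Some t) = Some z)"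

lemma iter_Suc: "(arr_step R ^^ Suc k) (Some x) = Option.bind ((arr_step R ^^ k) (Some x)) (rarr R)"
  by (simp add: arr_step_def)

lemma iter_closed:
  assumes "\<forall>x\<in>A. \<forall>y. rarr R x = Some y \<longrightarrow> y \<in> A" "x \<in> A"
  shows "(arr_step R ^^ k) (Some x) = Some z \<Longrightarrow> z \<in> A"
proof (induction k arbitrary: z)
  case 0 then show ?case using assms by simp
next
  case (Suc k)
  then obtain w where w: "(arr_step R ^^ k) (Some x) = Some w" "rarr R w = Some z"
    by (cases "(arr_step R ^^ k) (Some x)") (auto simp: iter_Suc)
  then show ?case using Suc.IH assms(1) by blast
qed

lemma iter_in_car: "wf_rep n R \<Longrightarrow> x \<in> rcar R \<Longrightarrow> (arr_step R ^^ k) (Some x) = Some z \<Longrightarrow> z \<in> rcar R"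
  by (rule iter_closed[of "rcar R" R x k z]) (auto dest: wf_arr)

lemma gen_indec: assumes "wf_rep n R" "gen R t" shows "indecomposable n R"
  unfolding indecomposable_def
proof (intro conjI)
  show "rcar R \<noteq> {}" using assms(2) by (auto simp: gen_def)
  show "\<forall>(A, B)\<in>decomps R. A = {} \<or> B = {}"
  proof (clarify)
    fix A B assume d: "(A, B) \<in> decomps R" and Bne: "B \<noteq> {}"
    have sA: "A \<in> subreps R" and sB: "B \<in> subreps R" and dis: "A \<inter> B = {}" and un: "A \<union> B = rcar R"
      using d by (auto simp: decomps_def)
    have allin: "rcar R \<subseteq> X" if "X \<in> subreps R" "t \<in> X" for X
    proof
      fix z assume "z \<in> rcar R"
      then obtain k where "(arr_step R ^^ k) (Some t) = Some z" using assms(2) by (auto simp: gen_def)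
      then show "z \<in> X" using iter_closed[of X R t k z] that by (auto simp: subreps_def)
    qed
    have "t \<in> A \<or> t \<in> B" using un assms(2) by (auto simp: gen_def)
    then show "A = {}"
    proof
      assume "t \<in> A" then have "rcar R \<subseteq> A" using allin sA by blast
      then show "A = {}" using Bne dis un by blast
    next
      assume "t \<in> B" then have "rcar R \<subseteq> B" using allin sB by blast
      then show "A = {}" using dis un by blast
    qed
  qed
qed (use assms in auto)

lemma exists_top: assumes "wf_rep n R" "rcar R \<noteq> {}"
  shows "\<exists>t\<in>rcar R. \<forall>x\<in>rcar R. rarr R x \<noteq> Some t"
proof (rule ccontr)
  assume "\<not> ?thesis"
  then have pre: "\<forall>t\<in>rcar R. \<exists>x\<in>rcar R. rarr R x = Some t" by blast
  have "\<forall>t\<in>rcar R. \<exists>x\<in>rcar R. (arr_step R ^^ k) (Some x) = Some t" for k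
  proof (induction k)
    case 0 then show ?case by auto
  next
    case (Suc k)
    show ?case
    proof
      fix t assume "t \<in> rcar R"
      then obtain x where x: "x \<in> rcar R" "(arr_step R ^^ k) (Some x) = Some t" using Suc by blast
      then obtain x' where x': "x' \<in> rcar R" "rarr R x' = Some x" using pre by blast
      have "(arr_step R ^^ Suc k) (Some x') = (arr_step R ^^ k) (arr_step R (Some x'))"
        by (simp only: funpow_Suc_right comp_def)
      then show "\<exists>x\<in>rcar R. (arr_step R ^^ Suc k) (Some x) = Some t" using x x' by auto
    qed
  qed
  note ih = this
  obtain K where K: "\<forall>x\<in>rcar R. (arr_step R ^^ K) (Some x) = None"
    using assms(1) by (auto simp: wf_rep_def nilpotent_rep_def)
  obtain t0 where t0: "t0 \<in> rcar R" using assms(2) by blast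
  then obtain x where "x \<in> rcar R" "(arr_step R ^^ K) (Some x) = Some t0" using ih[of K] by blast
  then show False using K by simp
qed

lemma indec_gen: assumes "indecomposable n R" shows "\<exists>t. gen R t"
proof -
  have wf: "wf_rep n R" and ne: "rcar R \<noteq> {}" and ind: "\<forall>(A, B)\<in>decomps R. A = {} \<or> B = {}"
    using assms by (auto simp: indecomposable_def)
  obtain t where t: "t \<in> rcar R" "\<forall>x\<in>rcar R. rarr R x \<noteq> Some t" using exists_top[OF wf ne] by blast
  define Orb where "Orb = {z\<in>rcar R. \<exists>k. (arr_step R ^^ k) (Some t) = Some z}"
  have tO: "t \<in> Orb" unfolding Orb_def using t(1) by (auto intro: exI[of _ 0])
  have sO: "Orb \<in> subreps R"
    unfolding subreps_def mem_Collect_eq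
  proof (intro conjI ballI allI impI)
    show "Orb \<subseteq> rcar R" by (auto simp: Orb_def)
    fix x y assume "x \<in> Orb" "rarr R x = Some y"
    then obtain k where "(arr_step R ^^ k) (Some t) = Some x" "x \<in> rcar R" by (auto simp: Orb_def)
    then have "(arr_step R ^^ Suc k) (Some t) = Some y" using \<open>rarr R x = Some y\<close> by (simp add: iter_Suc)
    moreover have "y \<in> rcar R" using wf_arr[OF wf \<open>x \<in> rcar R\<close> \<open>rarr R x = Some y\<close>] .
    ultimately show "y \<in> Orb" unfolding Orb_def by blast
  qed
  have sB: "rcar R - Orb \<in> subreps R"
    unfolding subreps_def mem_Collect_eq
  proof (intro conjI ballI allI impI)
    show "rcar R - Orb \<subseteq> rcar R" by blast
    fix x y assume x': "x \<in> rcar R - Orb" and xy: "rarr R x = Some y"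
    have x: "x \<in> rcar R" "x \<notin> Orb" using x' by auto
    have y: "y \<in> rcar R" using wf_arr[OF wf x(1) xy] .
    show "y \<in> rcar R - Orb"
    proof (intro DiffI y notI)
      assume "y \<in> Orb"
      then obtain k where k: "(arr_step R ^^ k) (Some t) = Some y" by (auto simp: Orb_def)
      show False
      proof (cases k)
        case 0 then show False using k t(2) x(1) xy by auto
      next
        case (Suc k')
        then obtain w where w: "(arr_step R ^^ k') (Some t) = Some w" "rarr R w = Some y"
          using k by (cases "(arr_step R ^^ k') (Some t)") (auto simp: iter_Suc)
        have wR: "w \<in> rcar R" using iter_in_car[OF wf t(1) w(1)] .
        have "w = x" using wf wR x(1) w(2) xy unfolding wf_rep_def by (metis option.distinct(1))
        then show False using w(1) wR x(2) unfolding Orb_def by blast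
      qed
    qed
  qed
  have OR: "Orb \<subseteq> rcar R" by (auto simp: Orb_def)
  have "(Orb, rcar R - Orb) \<in> decomps R" unfolding decomps_def using sO sB OR by blast
  then have "rcar R - Orb = {}" using ind tO by auto
  then have "gen R t" using t(1) unfolding gen_def Orb_def by blast
  then show ?thesis by blast
qed

lemma mod_back_aux: assumes "(D::nat) < n" shows "D = ((D + n - 1) mod n + 1) mod n"
proof (cases D)
  case 0 then show ?thesis using assms by (simp add: mod_if)
next
  case (Suc D')
  then have "(D + n - 1) mod n = D'" using assms by (simp add: mod_if)
  then show ?thesis using Suc assms by simp
qed

lemma gen_chain: assumes wf: "wf_rep n R" and g: "gen R t"
  shows "\<exists>d l. d < n \<and> 1 \<le> l \<and> iso_rep (chain n d l) R"
proof -
  let ?f = "arr_step R"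
  have t: "t \<in> rcar R" using g by (simp add: gen_def)
  obtain K where K: "\<forall>x\<in>rcar R. (?f ^^ K) (Some x) = None"
    using wf by (auto simp: wf_rep_def nilpotent_rep_def)
  have ex: "\<exists>k. (?f ^^ k) (Some t) = None" using K t by blast
  define L where "L = (LEAST k. (?f ^^ k) (Some t) = None)"
  have fL: "(?f ^^ L) (Some t) = None" unfolding L_def using ex by (rule LeastI_ex)
  have nN: "k < L \<Longrightarrow> (?f ^^ k) (Some t) \<noteq> None" for k unfolding L_def using not_less_Least by blast
  have L1: "1 \<le> L" using fL by (cases L) auto
  have after: "(?f ^^ k) (Some t) = None" if "L \<le> k" for k
  proof -
    have "(?f ^^ k) = (?f ^^ (k - L)) \<circ> (?f ^^ L)" using that by (simp add: funpow_add[symmetric])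
    then show ?thesis using fL by simp
  qed
  define e where "e k = the ((?f ^^ k) (Some t))" for k
  have eS: "(?f ^^ k) (Some t) = Some (e k)" if "k < L" for k using nN[OF that] by (auto simp: e_def)
  have e_in: "e k \<in> rcar R" if "k < L" for k using iter_in_car[OF wf t eS[OF that]] .
  have e_inj': "i = j" if "i < j" "j < L" "e i = e j" for i j
  proof -
    have "(?f ^^ (L - j + j)) (Some t) = (?f ^^ (L - j)) ((?f ^^ j) (Some t))" by (simp add: funpow_add)
    also have "\<dots> = (?f ^^ (L - j)) ((?f ^^ i) (Some t))" using eS that by simp
    also have "\<dots> = (?f ^^ (L - j + i)) (Some t)" by (simp add: funpow_add)
    finally have "(?f ^^ L) (Some t) = (?f ^^ (L - j + i)) (Some t)" using that by simp
    moreover have "L - j + i < L" using that by simp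
    ultimately show ?thesis using fL nN by metis
  qed
  have e_inj: "i = j" if "i < L" "j < L" "e i = e j" for i j
    using e_inj'[of i j] e_inj'[of j i] that by (metis linorder_neqE_nat)
  have e_surj: "\<exists>k<L. e k = z" if "z \<in> rcar R" for z
  proof -
    have gz: "\<exists>k. (?f ^^ k) (Some t) = Some z" using g that unfolding gen_def by simp
    then obtain k where k: "(?f ^^ k) (Some t) = Some z" by (elim exE)
    then have "k < L" using after by (metis not_le option.distinct(1))
    then show ?thesis using k eS by (metis option.inject)
  qed
  define h where "h j = e (L - 1 - j)" for j
  have bij: "bij_betw h {..<L} (rcar R)"
    unfolding bij_betw_def
  proof
    show "inj_on h {..<L}"
    proof (rule inj_onI)
      fix i j assume ij: "i \<in> {..<L}" "j \<in> {..<L}" "h i = h j"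
      have "L - 1 - i = L - 1 - j" using e_inj[of "L - 1 - i" "L - 1 - j"] ij L1 by (simp add: h_def)
      then show "i = j" using ij by simp
    qed
    show "h ` {..<L} = rcar R"
    proof
      show "h ` {..<L} \<subseteq> rcar R" unfolding h_def using e_in by auto
      show "rcar R \<subseteq> h ` {..<L}"
      proof
        fix z assume "z \<in> rcar R"
        then obtain k where k: "k < L" "e k = z" using e_surj by blast
        then have "h (L - 1 - k) = z" unfolding h_def by simp
        then show "z \<in> h ` {..<L}" by (intro image_eqI[where x="L - 1 - k"]) (use k L1 in auto)
      qed
    qed
  qed
  have arr: "rarr R (h j) = (if j = 0 then None else Some (h (j - 1)))" if "j < L" for j
  proof -
    have "rarr R (h j) = (?f ^^ Suc (L - 1 - j)) (Some t)"
      using eS[of "L - 1 - j"] that by (simp add: h_def iter_Suc)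
    also have "Suc (L - 1 - j) = L - j" using that by simp
    finally have *: "rarr R (h j) = (?f ^^ (L - j)) (Some t)" .
    show ?thesis
    proof (cases "j = 0")
      case True then show ?thesis using * fL by simp
    next
      case False
      then have "(?f ^^ (L - j)) (Some t) = Some (e (L - j))" using eS that by simp
      moreover have "L - 1 - (j - 1) = L - j" using False that by simp
      ultimately show ?thesis using * False by (simp add: h_def)
    qed
  qed
  define d where "d = rdeg R (h 0)"
  have h0: "h 0 \<in> rcar R" using bij_betw_apply[OF bij, of 0] L1 by simp
  have dn: "d < n" using wf h0 unfolding d_def wf_rep_def by blast
  have deg: "j < L \<Longrightarrow> rdeg R (h j) = (d + j) mod n" for j
  proof (induction j)
    case 0 then show ?case using dn by (simp add: d_def)
  next
    case (Suc j)
    have hS: "h (Suc j) \<in> rcar R" using bij_betw_apply[OF bij, of "Suc j"] Suc.prems by simp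
    have "rarr R (h (Suc j)) = Some (h j)" using arr[OF Suc.prems] by simp
    then have E: "rdeg R (h j) = (rdeg R (h (Suc j)) + n - 1) mod n" using wf hS unfolding wf_rep_def by blast
    have D: "rdeg R (h (Suc j)) < n" using wf hS unfolding wf_rep_def by blast
    have "rdeg R (h (Suc j)) = (rdeg R (h j) + 1) mod n" using mod_back_aux[OF D] E by simp
    also have "\<dots> = ((d + j) mod n + 1) mod n" using Suc by simp
    also have "\<dots> = (d + Suc j) mod n" by (simp add: mod_Suc_eq)
    finally show ?case .
  qed
  have "iso_rep (chain n d L) R"
    unfolding iso_rep_def
    by (rule exI[of _ h]) (use bij deg arr in auto)
  then show ?thesis using dn L1 by blast
qed

lemma indec_chain: assumes "indecomposable n R"
  shows "\<exists>d l. d < n \<and> 1 \<le> l \<and> iso_rep (chain n d l) R"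
  using gen_chain indec_gen assms by (meson indecomposable_def)

lemma gen_chain_top: assumes "1 \<le> l" shows "gen (chain n d l) (l - 1)"
  unfolding gen_def
proof (intro conjI ballI)
  show "l - 1 \<in> rcar (chain n d l)" using assms by simp
  fix z assume "z \<in> rcar (chain n d l)"
  then have "(arr_step (chain n d l) ^^ (l - 1 - z)) (Some (l - 1)) = Some z" by (simp add: iter_chain)
  then show "\<exists>k. (arr_step (chain n d l) ^^ k) (Some (l - 1)) = Some z" by blast
qed

lemma chain_indec: "n \<ge> 1 \<Longrightarrow> 1 \<le> l \<Longrightarrow> indecomposable n (chain n d l)"
  using gen_indec wf_chain gen_chain_top by blast

lemma chain_iso_eq: assumes "iso_rep (chain n d l) (chain n d' l')" "d < n" "d' < n" "1 \<le> l"
  shows "l = l' \<and> d = d'"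
proof -
  obtain h where h: "bij_betw h {..<l} {..<l'}"
    "\<forall>x\<in>{..<l}. (d' + h x) mod n = (d + x) mod n \<and> rarr (chain n d' l') (h x) = map_option h (rarr (chain n d l) x)"
    using assms(1) unfolding iso_rep_def by auto
  have l: "l = l'" using bij_betw_same_card[OF h(1)] by simp
  have r0: "rarr (chain n d' l') (h 0) = None" using h(2) assms(4) by auto
  have h0: "h 0 = 0" using r0 by (simp split: if_splits)
  have "(d' + h 0) mod n = (d + 0) mod n" using h(2) assms(4) by simp
  then have "d' mod n = d mod n" using h0 by simp
  then have "d = d'" using assms(2,3) by simp
  then show ?thesis using l by simp
qed

lemma wf_zero: "wf_rep n zero_rep"
  by (simp add: wf_rep_def zero_rep_def nilpotent_rep_def)

lemma cls_zero_iff: assumes "wf_rep n R" shows "cls n R = cls n zero_rep \<longleftrightarrow> rcar R = {}"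
proof -
  have "cls n R = cls n zero_rep \<longleftrightarrow> iso_rep R zero_rep" using cls_eq[OF assms wf_zero] .
  also have "\<dots> \<longleftrightarrow> rcar R = {}" unfolding iso_rep_def zero_rep_def by (auto simp: bij_betw_def)
  finally show ?thesis .
qed

lemma iter_iso:
  assumes wf: "wf_rep n R" and h: "\<forall>x\<in>rcar R. rarr S (h x) = map_option h (rarr R x)" and x: "x \<in> rcar R"
  shows "(arr_step R ^^ k) (Some x) = Some z \<Longrightarrow> (arr_step S ^^ k) (Some (h x)) = Some (h z)"
proof (induction k arbitrary: z)
  case 0 then show ?case by simp
next
  case (Suc k)
  then obtain w where w: "(arr_step R ^^ k) (Some x) = Some w" "rarr R w = Some z"
    by (cases "(arr_step R ^^ k) (Some x)") (auto simp: iter_Suc)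
  have "w \<in> rcar R" using iter_in_car[OF wf x w(1)] .
  then have "rarr S (h w) = Some (h z)" using h w(2) by simp
  then show ?case using Suc.IH[OF w(1)] by (simp add: iter_Suc)
qed

lemma gen_iso: assumes wf: "wf_rep n R" and iso: "iso_rep R S" and g: "gen R t" shows "\<exists>t'. gen S t'"
proof -
  obtain h where h: "bij_betw h (rcar R) (rcar S)"
    "\<forall>x\<in>rcar R. rdeg S (h x) = rdeg R x \<and> rarr S (h x) = map_option h (rarr R x)"
    using iso unfolding iso_rep_def by blast
  have t: "t \<in> rcar R" using g by (simp add: gen_def)
  have "gen S (h t)"
    unfolding gen_def
  proof
    show "h t \<in> rcar S" by (rule bij_betw_apply[OF h(1) t])
    show "\<forall>z\<in>rcar S. \<exists>k. (arr_step S ^^ k) (Some (h t)) = Some z"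
    proof
      fix z assume "z \<in> rcar S"
      then obtain x where x: "x \<in> rcar R" "z = h x" using h(1) by (auto simp: bij_betw_def)
      then obtain k where "(arr_step R ^^ k) (Some t) = Some x" using g by (auto simp: gen_def)
      then have "(arr_step S ^^ k) (Some (h t)) = Some (h x)"
        using iter_iso[OF wf _ t] h(2) by blast
      then show "\<exists>k. (arr_step S ^^ k) (Some (h t)) = Some z" using x by blast
    qed
  qed
  then show ?thesis by blast
qed



definition G :: "nat \<Rightarrow> qrep set set" where
  "G n = {cls n (chain n d l) | d l. d < n \<and> 1 \<le> l}"

lemma G_iso: "n \<ge> 1 \<Longrightarrow> C \<in> G n \<Longrightarrow> C \<in> isoclasses n"
  unfolding G_def using cls_in_isoclasses wf_chain by blast

lemma G_char: assumes "n \<ge> 1" shows "C \<in> G n \<longleftrightarrow> (\<exists>R. indecomposable n R \<and> C = cls n R)"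
proof
  assume "C \<in> G n" then show "\<exists>R. indecomposable n R \<and> C = cls n R"
    unfolding G_def using chain_indec[OF assms] by blast
next
  assume "\<exists>R. indecomposable n R \<and> C = cls n R"
  then obtain R where R: "indecomposable n R" "C = cls n R" by blast
  then obtain d l where dl: "d < n" "1 \<le> l" "iso_rep (chain n d l) R" using indec_chain by blast
  have "cls n (chain n d l) = cls n R"
    using cls_eq[OF wf_chain[OF assms] ] R(1) dl(3) by (simp add: indecomposable_def)
  then show "C \<in> G n" using dl R unfolding G_def by blast
qed

lemma G_rep: assumes n: "n \<ge> 1" and C: "C \<in> G n" shows "indecomposable n (rep_of C)"
proof -
  obtain d l where dl: "d < n" "1 \<le> l" "C = cls n (chain n d l)" using C unfolding G_def by blast
  have ic: "C \<in> isoclasses n" using G_iso[OF n C] .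
  have w: "wf_rep n (rep_of C)" using rep_of_cls[OF ic] by simp
  have "rep_of C \<in> C" using rep_of_cls[OF ic] by simp
  then have "iso_rep (rep_of C) (chain n d l)" using dl(3) by (simp add: cls_def)
  then have "iso_rep (chain n d l) (rep_of C)" using iso_sym w by blast
  then obtain t where "gen (rep_of C) t"
    using gen_iso[OF wf_chain[OF n] _ gen_chain_top[OF dl(2)]] by blast
  then show ?thesis using gen_indec w by blast
qed

lemma notG_rep: assumes n: "n \<ge> 1" and ic: "C \<in> isoclasses n" and nG: "C \<notin> G n"
  shows "\<not> indecomposable n (rep_of C)"
  using G_char[OF n] rep_of_cls[OF ic] nG by metis

lemma zero_notG: assumes "n \<ge> 1" shows "cls n zero_rep \<notin> G n"
proof
  assume "cls n zero_rep \<in> G n"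
  then obtain d l where "1 \<le> l" "cls n zero_rep = cls n (chain n d l)" unfolding G_def by blast
  then have "cls n (chain n d l) = cls n zero_rep" by simp
  then have "{..<l} = {}" using cls_zero_iff[OF wf_chain[OF assms], of d l] by simp
  moreover have "0 \<in> {..<l}" using \<open>1 \<le> l\<close> by simp
  ultimately show False by simp
qed

lemma G_ne_zero: assumes "n \<ge> 1" "C \<in> G n" shows "C \<noteq> cls n zero_rep"
  using zero_notG assms by blast

lemma restr_all[simp]: "restr R (rcar R) = R" by (simp add: restr_def)

lemma subreps_empty: "{} \<in> subreps R" by (simp add: subreps_def)
lemma subreps_all: "wf_rep n R \<Longrightarrow> rcar R \<in> subreps R" by (auto simp: subreps_def dest: wf_arr)

lemma decomps_indec: assumes "indecomposable n R"
  shows "decomps R = {({}, rcar R), (rcar R, {})}"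
proof -
  have wf: "wf_rep n R" using assms by (simp add: indecomposable_def)
  show ?thesis
  proof
    show "decomps R \<subseteq> {({}, rcar R), (rcar R, {})}"
      using assms unfolding indecomposable_def decomps_def by auto
    show "{({}, rcar R), (rcar R, {})} \<subseteq> decomps R"
      using subreps_empty subreps_all[OF wf] unfolding decomps_def by auto
  qed
qed

lemma finite_decomps: "wf_rep n R \<Longrightarrow> finite (decomps R)"
proof -
  assume "wf_rep n R"
  then have "finite (rcar R)" by (simp add: wf_rep_def)
  moreover have "decomps R \<subseteq> Pow (rcar R) \<times> Pow (rcar R)" by (auto simp: decomps_def subreps_def)
  ultimately show ?thesis by (meson finite_Pow_iff finite_SigmaI finite_subset)
qed

lemma finite_subreps: "wf_rep n R \<Longrightarrow> finite (subreps R)"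
proof -
  assume "wf_rep n R"
  then have "finite (rcar R)" by (simp add: wf_rep_def)
  moreover have "subreps R \<subseteq> Pow (rcar R)" by (auto simp: subreps_def)
  ultimately show ?thesis by (meson finite_Pow_iff finite_subset)
qed

lemma filter2: "{(A, B) \<in> {(a1, b1), (a2, b2)}. Q A B} =
  (if Q a1 b1 then {(a1, b1)} else {}) \<union> (if Q a2 b2 then {(a2, b2)} else {})"
  by auto

lemma card2: "a \<noteq> b \<Longrightarrow> card ((if P then {a} else {}) \<union> (if Q then {b} else {})) = (if P then 1 else 0) + (if Q then 1 else 0)"
  by auto

lemma ofnat2: "(of_nat ((if P then 1 else 0) + (if Q then 1 else 0)) :: complex) = (if P then 1 else 0) + (if Q then 1 else 0)"
  by simp

lemma pt: "(x::complex) * ((if P \<and> c = b then 1 else 0) + (if c = a \<and> Q then 1 else 0))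
   = (if c = b then (if P then x else 0) else 0) + (if c = a then (if Q then x else 0) else 0)"
  by auto

lemma delta_sum: "finite S \<Longrightarrow> (\<Sum>c\<in>S. if c = a then (if P then (x::'a\<Rightarrow>complex) c else 0) else 0)
    = (if a \<in> S then (if P then x a else 0) else 0)"
  by (simp add: sum.delta)

lemma fin_eq: "(if z = c1 then (x2::complex) else 0) + (if z = c2 then x1 else 0)
   = x1 * (if c2 = z then 1 else 0) + (if c1 = z then 1 else 0) * x2"
  by auto

lemma prim_of_G:
  assumes n: "n \<ge> 1" and x: "x \<in> hall n" and sup: "\<And>C. x C \<noteq> 0 \<Longrightarrow> C \<in> G n"
  shows "primitive n x"
proof -
  let ?Z = "cls n zero_rep"
  let ?S = "{C. x C \<noteq> 0}"
  have fin: "finite ?S" using x by (simp add: hall_def)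
  have xZ: "x ?Z = 0" using sup zero_notG[OF n] by blast
  have card_eq: "of_nat (card {(A, B) \<in> decomps (rep_of C).
           cls n (restr (rep_of C) A) = C1 \<and> cls n (restr (rep_of C) B) = C2})
        = (if ?Z = C1 \<and> C = C2 then 1 else 0) + (if C = C1 \<and> ?Z = C2 then (1::complex) else 0)"
    if C: "C \<in> G n" for C C1 C2
  proof -
    let ?R = "rep_of C"
    have ind: "indecomposable n ?R" using G_rep[OF n C] .
    have wf: "wf_rep n ?R" and ne: "rcar ?R \<noteq> {}" using ind by (auto simp: indecomposable_def)
    have ic: "C \<in> isoclasses n" using G_iso[OF n C] .
    have c0: "cls n (restr ?R {}) = ?Z" using cls_zero_iff[OF wf_restr[OF wf subreps_empty]] by simp
    have c1: "cls n (restr ?R (rcar ?R)) = C" using rep_of_cls[OF ic] by simp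
    have CZ: "C \<noteq> ?Z" using G_ne_zero[OF n C] .
    let ?a = "({}, rcar ?R)" and ?b = "(rcar ?R, {})"
    have "{(A, B) \<in> decomps ?R. cls n (restr ?R A) = C1 \<and> cls n (restr ?R B) = C2}
        = {(A, B) \<in> {?a, ?b}. cls n (restr ?R A) = C1 \<and> cls n (restr ?R B) = C2}"
      by (simp only: decomps_indec[OF ind])
    also have "\<dots> = (if cls n (restr ?R {}) = C1 \<and> cls n (restr ?R (rcar ?R)) = C2 then {?a} else {})
       \<union> (if cls n (restr ?R (rcar ?R)) = C1 \<and> cls n (restr ?R {}) = C2 then {?b} else {})"
      by (rule filter2)
    also have "\<dots> = (if ?Z = C1 \<and> C = C2 then {?a} else {}) \<union> (if C = C1 \<and> ?Z = C2 then {?b} else {})"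
      by (simp only: c0 c1)
    finally have S: "{(A, B) \<in> decomps ?R. cls n (restr ?R A) = C1 \<and> cls n (restr ?R B) = C2}
       = (if ?Z = C1 \<and> C = C2 then {?a} else {}) \<union> (if C = C1 \<and> ?Z = C2 then {?b} else {})" .
    have ab: "?a \<noteq> ?b" using ne by simp
    show ?thesis by (simp only: S card2[OF ab] ofnat2)
  qed
  have "hcomul n x = (\<lambda>(C1, C2). x C1 * hone n C2 + hone n C1 * x C2)"
  proof (rule ext, clarify)
    fix C1 C2
    have "hcomul n x (C1, C2) = (\<Sum>C\<in>?S. x C * of_nat (card {(A, B) \<in> decomps (rep_of C).
           cls n (restr (rep_of C) A) = C1 \<and> cls n (restr (rep_of C) B) = C2}))"
      by (simp add: hcomul_def)
    also have "\<dots> = (\<Sum>C\<in>?S. x C * ((if ?Z = C1 \<and> C = C2 then 1 else 0) + (if C = C1 \<and> ?Z = C2 then 1 else 0)))"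
    proof (rule sum.cong[OF refl])
      fix C assume "C \<in> ?S"
      then have "C \<in> G n" using sup by simp
      then show "x C * of_nat (card {(A, B) \<in> decomps (rep_of C).
           cls n (restr (rep_of C) A) = C1 \<and> cls n (restr (rep_of C) B) = C2})
         = x C * ((if ?Z = C1 \<and> C = C2 then 1 else 0) + (if C = C1 \<and> ?Z = C2 then 1 else 0))"
        by (simp only: card_eq)
    qed
    also have "\<dots> = (\<Sum>C\<in>?S. (if C = C2 then (if ?Z = C1 then x C else 0) else 0)
        + (if C = C1 then (if ?Z = C2 then x C else 0) else 0))"
      by (rule sum.cong[OF refl]) (rule pt)
    also have "\<dots> = (\<Sum>C\<in>?S. (if C = C2 then (if ?Z = C1 then x C else 0) else 0))
        + (\<Sum>C\<in>?S. (if C = C1 then (if ?Z = C2 then x C else 0) else 0))"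
      by (rule sum.distrib)
    also have "\<dots> = (if ?Z = C1 then x C2 else 0) + (if ?Z = C2 then x C1 else 0)"
      using delta_sum[OF fin, where x=x and a=C2 and P="?Z = C1"] delta_sum[OF fin, where x=x and a=C1 and P="?Z = C2"] by simp
    also have "\<dots> = x C1 * hone n C2 + hone n C1 * x C2"
      unfolding hone_def delta_def by (rule fin_eq)
    finally show "hcomul n x (C1, C2) = x C1 * hone n C2 + hone n C1 * x C2" .
  qed
  then show ?thesis using x by (simp add: primitive_def)
qed



lemma glue_iso:
  assumes dR: "(A, B) \<in> decomps R" and dS: "(A', B') \<in> decomps S"
    and iA: "iso_rep (restr R A) (restr S A')" and iB: "iso_rep (restr R B) (restr S B')"
  shows "iso_rep R S"
proof -
  obtain f where f: "bij_betw f A A'"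
    "\<forall>x\<in>A. rdeg S (f x) = rdeg R x \<and> rarr S (f x) = map_option f (rarr R x)"
    using iA unfolding iso_rep_def by auto
  obtain g where g: "bij_betw g B B'"
    "\<forall>x\<in>B. rdeg S (g x) = rdeg R x \<and> rarr S (g x) = map_option g (rarr R x)"
    using iB unfolding iso_rep_def by auto
  have R: "A \<inter> B = {}" "A \<union> B = rcar R" "\<forall>x\<in>A. \<forall>y. rarr R x = Some y \<longrightarrow> y \<in> A"
     "\<forall>x\<in>B. \<forall>y. rarr R x = Some y \<longrightarrow> y \<in> B"
    using dR by (auto simp: decomps_def subreps_def)
  have S: "A' \<inter> B' = {}" "A' \<union> B' = rcar S" using dS by (auto simp: decomps_def)
  define h where "h x = (if x \<in> A then f x else g x)" for x
  have "bij_betw h A A' = bij_betw f A A'" by (rule bij_betw_cong) (simp add: h_def)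
  then have b1: "bij_betw h A A'" using f(1) by simp
  have "bij_betw h B B' = bij_betw g B B'" by (rule bij_betw_cong) (use R(1) in \<open>auto simp: h_def\<close>)
  then have b2: "bij_betw h B B'" using g(1) by simp
  have bij: "bij_betw h (rcar R) (rcar S)" using bij_betw_combine[OF b1 b2 S(1)] R(2) S(2) by simp
  have "\<forall>x\<in>rcar R. rdeg S (h x) = rdeg R x \<and> rarr S (h x) = map_option h (rarr R x)"
  proof
    fix x assume "x \<in> rcar R"
    then consider "x \<in> A" | "x \<in> B" "x \<notin> A" using R(2) by blast
    then show "rdeg S (h x) = rdeg R x \<and> rarr S (h x) = map_option h (rarr R x)"
    proof cases
      case 1
      have "map_option f (rarr R x) = map_option h (rarr R x)"
        using R(3) 1 by (cases "rarr R x") (auto simp: h_def)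
      then show ?thesis using f(2) 1 by (simp add: h_def)
    next
      case 2
      have "map_option g (rarr R x) = map_option h (rarr R x)"
        using R(4,1) 2 by (cases "rarr R x") (auto simp: h_def)
      then show ?thesis using g(2) 2 by (simp add: h_def)
    qed
  qed
  then show ?thesis using bij unfolding iso_rep_def by blast
qed

lemma G_of_prim:
  assumes n: "n \<ge> 1" and p: "primitive n x" and xC: "x C \<noteq> 0"
  shows "C \<in> G n"
proof (rule ccontr)
  assume nG: "C \<notin> G n"
  let ?Z = "cls n zero_rep"
  let ?S = "{C. x C \<noteq> 0}"
  have x: "x \<in> hall n" and hc: "hcomul n x = (\<lambda>(C1, C2). x C1 * hone n C2 + hone n C1 * x C2)"
    using p by (auto simp: primitive_def)
  have fin: "finite ?S" and supp: "\<And>C. x C \<noteq> 0 \<Longrightarrow> C \<in> isoclasses n" using x by (auto simp: hall_def)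
  have ic: "C \<in> isoclasses n" using supp xC .
  let ?R = "rep_of C"
  have wf: "wf_rep n ?R" and Ceq: "C = cls n ?R" using rep_of_cls[OF ic] by auto
  have nind: "\<not> indecomposable n ?R" using notG_rep[OF n ic nG] .
  show False
  proof (cases "rcar ?R = {}")
    case True
    then have CZ: "C = ?Z" using cls_zero_iff[OF wf] Ceq by simp
    have cnt: "card {(A, B) \<in> decomps (rep_of C').
           cls n (restr (rep_of C') A) = ?Z \<and> cls n (restr (rep_of C') B) = ?Z} = (if C' = ?Z then 1 else 0)"
      if "C' \<in> ?S" for C'
    proof -
      have ic': "C' \<in> isoclasses n" using supp that by simp
      have wf': "wf_rep n (rep_of C')" and Ceq': "C' = cls n (rep_of C')" using rep_of_cls[OF ic'] by auto
      have "{(A, B) \<in> decomps (rep_of C').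
           cls n (restr (rep_of C') A) = ?Z \<and> cls n (restr (rep_of C') B) = ?Z}
          = {(A, B) \<in> decomps (rep_of C'). A = {} \<and> B = {}}"
      proof -
        have "cls n (restr (rep_of C') A) = ?Z \<longleftrightarrow> A = {}" if "A \<in> subreps (rep_of C')" for A
          using cls_zero_iff[OF wf_restr[OF wf' that]] by simp
        then show ?thesis unfolding decomps_def by auto
      qed
      also have "\<dots> = (if rcar (rep_of C') = {} then {({}, {})} else {})"
        unfolding decomps_def using subreps_empty by auto
      finally show ?thesis using cls_zero_iff[OF wf'] Ceq' by auto
    qed
    have "hcomul n x (?Z, ?Z) = (\<Sum>C'\<in>?S. x C' * of_nat (card {(A, B) \<in> decomps (rep_of C').
           cls n (restr (rep_of C') A) = ?Z \<and> cls n (restr (rep_of C') B) = ?Z}))"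
      by (simp add: hcomul_def)
    also have "\<dots> = (\<Sum>C'\<in>?S. if C' = ?Z then x C' else 0)"
    proof (rule sum.cong[OF refl])
      fix C' assume C': "C' \<in> ?S"
      show "x C' * of_nat (card {(A, B) \<in> decomps (rep_of C').
           cls n (restr (rep_of C') A) = ?Z \<and> cls n (restr (rep_of C') B) = ?Z}) = (if C' = ?Z then x C' else 0)"
        unfolding cnt[OF C'] by simp
    qed
    also have "\<dots> = x ?Z" using fin by (simp add: sum.delta')
    finally have "x ?Z = x ?Z + x ?Z" using hc by (simp add: hone_def delta_def)
    then show False using xC CZ by simp
  next
    case False
    then obtain A B where AB: "(A, B) \<in> decomps ?R" "A \<noteq> {}" "B \<noteq> {}"
      using nind wf unfolding indecomposable_def by auto
    have sA: "A \<in> subreps ?R" and sB: "B \<in> subreps ?R" using AB(1) by (auto simp: decomps_def)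
    have wA: "wf_rep n (restr ?R A)" and wB: "wf_rep n (restr ?R B)" using wf_restr[OF wf] sA sB by auto
    define C1 where "C1 = cls n (restr ?R A)"
    define C2 where "C2 = cls n (restr ?R B)"
    have C1Z: "C1 \<noteq> ?Z" and C2Z: "C2 \<noteq> ?Z" using cls_zero_iff[OF wA] cls_zero_iff[OF wB] AB
      by (auto simp: C1_def C2_def)
    let ?D = "\<lambda>C'. {(A, B) \<in> decomps (rep_of C').
           cls n (restr (rep_of C') A) = C1 \<and> cls n (restr (rep_of C') B) = C2}"
    have only: "?D C' = {}" if "C' \<in> ?S" "C' \<noteq> C" for C'
    proof (rule ccontr)
      assume "?D C' \<noteq> {}"
      then obtain A' B' where AB': "(A', B') \<in> decomps (rep_of C')"
        "cls n (restr (rep_of C') A') = C1" "cls n (restr (rep_of C') B') = C2" by auto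
      have ic': "C' \<in> isoclasses n" using supp that by simp
      have wf': "wf_rep n (rep_of C')" and Ceq': "C' = cls n (rep_of C')" using rep_of_cls[OF ic'] by auto
      have sA': "A' \<in> subreps (rep_of C')" and sB': "B' \<in> subreps (rep_of C')" using AB'(1) by (auto simp: decomps_def)
      have "iso_rep (restr (rep_of C') A') (restr ?R A)"
        using cls_eq[OF wf_restr[OF wf' sA'] wA] AB'(2) C1_def by simp
      moreover have "iso_rep (restr (rep_of C') B') (restr ?R B)"
        using cls_eq[OF wf_restr[OF wf' sB'] wB] AB'(3) C2_def by simp
      ultimately have "iso_rep (rep_of C') ?R" using glue_iso AB'(1) AB(1) by blast
      then have "C' = C" using cls_eq[OF wf' wf] Ceq Ceq' by simp
      then show False using that by simp
    qed
    have "hcomul n x (C1, C2) = (\<Sum>C'\<in>?S. x C' * of_nat (card (?D C')))"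
      by (simp add: hcomul_def)
    also have "\<dots> = (\<Sum>C'\<in>?S. if C' = C then x C' * of_nat (card (?D C')) else 0)"
    proof (rule sum.cong[OF refl])
      fix C' assume C': "C' \<in> ?S"
      show "x C' * of_nat (card (?D C')) = (if C' = C then x C' * of_nat (card (?D C')) else 0)"
      proof (cases "C' = C")
        case False
        have "?D C' = {}" by (rule only[OF C' False])
        then show ?thesis using False by (simp only: card.empty of_nat_0 mult_zero_right if_False)
      qed simp
    qed
    also have "\<dots> = x C * of_nat (card (?D C))" using fin xC by (simp add: sum.delta')
    finally have eq: "x C * of_nat (card (?D C)) = 0" using hc C1Z C2Z by (simp add: hone_def delta_def)
    have finD: "finite (?D C)" by (rule finite_subset[OF _ finite_decomps[OF wf]]) auto
    have memD: "(A, B) \<in> ?D C" using AB(1) by (simp add: C1_def C2_def)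
    have "?D C \<noteq> {}" using memD by (intro notI) (simp only: empty_iff)
    then have "card (?D C) \<noteq> 0" using finD by (simp only: card_eq_0_iff de_Morgan_conj not_not) simp
    then show False using eq xC by simp
  qed
qed

lemma nQ_char: assumes n: "n \<ge> 1"
  shows "x \<in> nQ n \<longleftrightarrow> x \<in> hall n \<and> (\<forall>C. x C \<noteq> 0 \<longrightarrow> C \<in> G n)"
  using prim_of_G[OF n] G_of_prim[OF n] by (auto simp: nQ_def primitive_def)



lemma sum_subreps_iso:
  assumes wR: "wf_rep n R" and wS: "wf_rep n S" and iso: "iso_rep R S"
  shows "(\<Sum>A\<in>subreps R. F (cls n (restr R A)) (cls n (quot R A)))
       = (\<Sum>A\<in>subreps S. F (cls n (restr S A)) (cls n (quot S A)))"
proof -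
  obtain h where h: "bij_betw h (rcar R) (rcar S)"
    and hp: "\<forall>x\<in>rcar R. rdeg S (h x) = rdeg R x \<and> rarr S (h x) = map_option h (rarr R x)"
    using iso unfolding iso_rep_def by blast
  have inj: "inj_on h (rcar R)" using h by (simp add: bij_betw_def)
  have img: "h ` rcar R = rcar S" using h by (simp add: bij_betw_def)
  define pre where "pre A' = {x \<in> rcar R. h x \<in> A'}" for A'
  have sub_img: "h ` A \<in> subreps S" if A: "A \<in> subreps R" for A
  proof -
    have AR: "A \<subseteq> rcar R" and cl: "\<forall>x\<in>A. \<forall>y. rarr R x = Some y \<longrightarrow> y \<in> A"
      using A by (auto simp: subreps_def)
    have "\<forall>y\<in>h ` A. \<forall>z. rarr S y = Some z \<longrightarrow> z \<in> h ` A"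
    proof (intro ballI allI impI)
      fix y z assume y: "y \<in> h ` A" and yz: "rarr S y = Some z"
      then obtain x where x: "x \<in> A" "y = h x" by blast
      have "rarr S (h x) = map_option h (rarr R x)" using hp x(1) AR by blast
      then obtain w where w: "rarr R x = Some w" "z = h w" using yz x(2) by (cases "rarr R x") auto
      then show "z \<in> h ` A" using cl x(1) by blast
    qed
    moreover have "h ` A \<subseteq> rcar S" using AR img by blast
    ultimately show ?thesis by (simp add: subreps_def)
  qed
  have sub_pre: "pre A' \<in> subreps R" if A': "A' \<in> subreps S" for A'
  proof -
    have cl: "\<forall>x\<in>A'. \<forall>y. rarr S x = Some y \<longrightarrow> y \<in> A'" using A' by (auto simp: subreps_def)
    have "\<forall>x\<in>pre A'. \<forall>y. rarr R x = Some y \<longrightarrow> y \<in> pre A'"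
    proof (intro ballI allI impI)
      fix x y assume x: "x \<in> pre A'" and xy: "rarr R x = Some y"
      have xR: "x \<in> rcar R" "h x \<in> A'" using x by (auto simp: pre_def)
      have yR: "y \<in> rcar R" using wf_arr[OF wR xR(1) xy] .
      have "rarr S (h x) = Some (h y)" using hp xR(1) xy by simp
      then have "h y \<in> A'" using cl xR(2) by blast
      then show "y \<in> pre A'" using yR by (simp add: pre_def)
    qed
    moreover have "pre A' \<subseteq> rcar R" by (auto simp: pre_def)
    ultimately show ?thesis by (simp add: subreps_def)
  qed
  have pre_img: "pre (h ` A) = A" if "A \<in> subreps R" for A
  proof -
    have AR: "A \<subseteq> rcar R" using that by (simp add: subreps_def)
    show ?thesis unfolding pre_def using AR inj_on_image_mem_iff[OF inj _ AR] by blast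
  qed
  have img_pre: "h ` pre A' = A'" if "A' \<in> subreps S" for A'
  proof -
    have A'S: "A' \<subseteq> rcar S" using that by (simp add: subreps_def)
    show ?thesis unfolding pre_def
    proof
      show "h ` {x \<in> rcar R. h x \<in> A'} \<subseteq> A'" by blast
      show "A' \<subseteq> h ` {x \<in> rcar R. h x \<in> A'}"
      proof
        fix y assume y: "y \<in> A'"
        then have "y \<in> rcar S" using A'S by blast
        then have "y \<in> h ` rcar R" using img by simp
        then obtain x where x: "x \<in> rcar R" "y = h x" by (elim imageE) simp
        then show "y \<in> h ` {x \<in> rcar R. h x \<in> A'}" using y by (intro image_eqI[where x=x]) auto
      qed
    qed
  qed
  have val: "F (cls n (restr S (h ` A))) (cls n (quot S (h ` A))) = F (cls n (restr R A)) (cls n (quot R A))"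
    if A: "A \<in> subreps R" for A
  proof -
    have AR: "A \<subseteq> rcar R" using A by (simp add: subreps_def)
    have A'S: "h ` A \<in> subreps S" using sub_img[OF A] .
    have i1: "iso_rep (restr R A) (restr S (h ` A))"
      unfolding iso_rep_def
    proof (intro exI conjI)
      show "bij_betw h (rcar (restr R A)) (rcar (restr S (h ` A)))"
        using bij_betw_subset[OF h AR refl] by simp
      show "\<forall>x\<in>rcar (restr R A). rdeg (restr S (h ` A)) (h x) = rdeg (restr R A) x \<and>
          rarr (restr S (h ` A)) (h x) = map_option h (rarr (restr R A) x)"
        using hp AR by auto
    qed
    have i2: "iso_rep (quot R A) (quot S (h ` A))"
      unfolding iso_rep_def
    proof (intro exI conjI)
      have "h ` (rcar R - A) = rcar S - h ` A" using inj_on_image_set_diff[OF inj Diff_subset AR] img by simp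
      then show "bij_betw h (rcar (quot R A)) (rcar (quot S (h ` A)))"
        unfolding rcar_quot using bij_betw_subset[OF h Diff_subset, of A] by metis
      show "\<forall>x\<in>rcar (quot R A). rdeg (quot S (h ` A)) (h x) = rdeg (quot R A) x \<and>
          rarr (quot S (h ` A)) (h x) = map_option h (rarr (quot R A) x)"
      proof
        fix x assume x: "x \<in> rcar (quot R A)"
        then have xR: "x \<in> rcar R" by simp
        have "rarr (quot S (h ` A)) (h x) = map_option h (rarr (quot R A) x)"
        proof (cases "rarr R x")
          case None
          then have "rarr S (h x) = None" using hp xR by simp
          then show ?thesis using None by (simp add: rarr_quot)
        next
          case (Some w)
          have wR: "w \<in> rcar R" using wf_arr[OF wR xR Some] .
          have "rarr S (h x) = Some (h w)" using hp xR Some by simp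
          moreover have "h w \<in> h ` A \<longleftrightarrow> w \<in> A" using inj_on_image_mem_iff[OF inj wR AR] .
          ultimately show ?thesis using Some by (simp add: rarr_quot)
        qed
        then show "rdeg (quot S (h ` A)) (h x) = rdeg (quot R A) x \<and>
          rarr (quot S (h ` A)) (h x) = map_option h (rarr (quot R A) x)" using hp xR by simp
      qed
    qed
    have "cls n (restr R A) = cls n (restr S (h ` A))"
      using cls_eq[OF wf_restr[OF wR A] wf_restr[OF wS A'S]] i1 by simp
    moreover have "cls n (quot R A) = cls n (quot S (h ` A))"
      using cls_eq[OF wf_quot[OF wR A] wf_quot[OF wS A'S]] i2 by simp
    ultimately show ?thesis by simp
  qed
  show ?thesis
    by (rule sum.reindex_bij_witness[where i=pre and j="image h"])
       (use pre_img sub_img img_pre sub_pre val in auto)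
qed

lemma subreps_chain: "subreps (chain n d l) = (\<lambda>p. {..<p}) ` {..l}"
proof
  show "(\<lambda>p. {..<p}) ` {..l} \<subseteq> subreps (chain n d l)"
    by (auto simp: subreps_def)
  show "subreps (chain n d l) \<subseteq> (\<lambda>p. {..<p}) ` {..l}"
  proof
    fix A assume A: "A \<in> subreps (chain n d l)"
    then have Al: "A \<subseteq> {..<l}" by (simp add: subreps_def)
    have cl: "x - 1 \<in> A" if "x \<in> A" "x \<noteq> 0" for x
      using A that unfolding subreps_def by auto
    have down: "j \<in> A" if "x \<in> A" "j \<le> x" for x j
    proof -
      have "\<forall>x. x \<in> A \<longrightarrow> x - j = k \<longrightarrow> j \<le> x \<longrightarrow> j \<in> A" for k
      proof (induction k)
        case 0 then show ?case by auto
      next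
        case (Suc k)
        show ?case
        proof (intro allI impI)
          fix x assume x: "x \<in> A" "x - j = Suc k" "j \<le> x"
          then have "x - 1 \<in> A" using cl by simp
          moreover have "(x - 1) - j = k" "j \<le> x - 1" using x(2,3) by auto
          ultimately show "j \<in> A" using Suc.IH by blast
        qed
      qed
      then show ?thesis using that by blast
    qed
    show "A \<in> (\<lambda>p. {..<p}) ` {..l}"
    proof (cases "A = {}")
      case True then show ?thesis by (intro image_eqI[where x=0]) auto
    next
      case False
      have fin: "finite A" using Al finite_subset by blast
      have mA: "Max A \<in> A" using Max_in[OF fin False] .
      have eq: "A = {..<Suc (Max A)}"
      proof
        show "A \<subseteq> {..<Suc (Max A)}" using Max_ge[OF fin] by (auto simp: less_Suc_eq_le)
        show "{..<Suc (Max A)} \<subseteq> A" using down[OF mA] by (auto simp: less_Suc_eq_le)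
      qed
      have "Suc (Max A) \<le> l" using mA Al by auto
      then show ?thesis using eq by (intro image_eqI[where x="Suc (Max A)"]) auto
    qed
  qed
qed

lemma restr_chain: "restr (chain n d l) {..<p} = chain n d p"
  by (simp add: restr_def chain_def)

lemma quot_chain_iso: assumes "p \<le> l"
  shows "iso_rep (quot (chain n d l) {..<p}) (chain n ((d + p) mod n) (l - p))"
  unfolding iso_rep_def
proof (intro exI conjI)
  show "bij_betw (\<lambda>j. j - p) (rcar (quot (chain n d l) {..<p})) (rcar (chain n ((d + p) mod n) (l - p)))"
    unfolding bij_betw_def
  proof
    show "inj_on (\<lambda>j. j - p) (rcar (quot (chain n d l) {..<p}))"
      by (rule inj_onI) auto
    show "(\<lambda>j. j - p) ` rcar (quot (chain n d l) {..<p}) = rcar (chain n ((d + p) mod n) (l - p))"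
    proof
      show "(\<lambda>j. j - p) ` rcar (quot (chain n d l) {..<p}) \<subseteq> rcar (chain n ((d + p) mod n) (l - p))"
        by auto
      show "rcar (chain n ((d + p) mod n) (l - p)) \<subseteq> (\<lambda>j. j - p) ` rcar (quot (chain n d l) {..<p})"
      proof
        fix y assume "y \<in> rcar (chain n ((d + p) mod n) (l - p))"
        then have "y < l - p" by simp
        then show "y \<in> (\<lambda>j. j - p) ` rcar (quot (chain n d l) {..<p})"
          by (intro image_eqI[where x="y + p"]) auto
      qed
    qed
  qed
  show "\<forall>x\<in>rcar (quot (chain n d l) {..<p}).
       rdeg (chain n ((d + p) mod n) (l - p)) (x - p) = rdeg (quot (chain n d l) {..<p}) x \<and>
       rarr (chain n ((d + p) mod n) (l - p)) (x - p) = map_option (\<lambda>j. j - p) (rarr (quot (chain n d l) {..<p}) x)"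
  proof
    fix x assume "x \<in> rcar (quot (chain n d l) {..<p})"
    then have x: "p \<le> x" "x < l" by auto
    have "((d + p) mod n + (x - p)) mod n = (d + p + (x - p)) mod n" by (simp add: mod_add_left_eq)
    also have "d + p + (x - p) = d + x" using x by simp
    finally have deg: "((d + p) mod n + (x - p)) mod n = (d + x) mod n" .
    have arr: "rarr (chain n ((d + p) mod n) (l - p)) (x - p) = map_option (\<lambda>j. j - p) (rarr (quot (chain n d l) {..<p}) x)"
      using x by (auto simp: rarr_quot)
    show "rdeg (chain n ((d + p) mod n) (l - p)) (x - p) = rdeg (quot (chain n d l) {..<p}) x \<and>
       rarr (chain n ((d + p) mod n) (l - p)) (x - p) = map_option (\<lambda>j. j - p) (rarr (quot (chain n d l) {..<p}) x)"
      using deg arr by simp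
  qed
qed

lemma hmul_chain: assumes n: "n \<ge> 1"
  shows "hmul n a b (cls n (chain n d l))
     = (\<Sum>p\<le>l. b (cls n (chain n d p)) * a (cls n (chain n ((d + p) mod n) (l - p))))"
proof -
  let ?C = "cls n (chain n d l)"
  have wc: "wf_rep n (chain n d l)" using wf_chain[OF n] .
  have ic: "?C \<in> isoclasses n" using cls_in_isoclasses[OF wc] .
  have wfR: "wf_rep n (rep_of ?C)" and eq: "?C = cls n (rep_of ?C)" using rep_of_cls[OF ic] by auto
  have iso: "iso_rep (rep_of ?C) (chain n d l)" using cls_eq[OF wfR wc] eq by simp
  have "hmul n a b ?C = (\<Sum>A\<in>subreps (rep_of ?C). b (cls n (restr (rep_of ?C) A)) * a (cls n (quot (rep_of ?C) A)))"
    using ic by (simp add: hmul_def)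
  also have "\<dots> = (\<Sum>A\<in>subreps (chain n d l). b (cls n (restr (chain n d l) A)) * a (cls n (quot (chain n d l) A)))"
    by (rule sum_subreps_iso[OF wfR wc iso, where F="\<lambda>u v. b u * a v"])
  also have "\<dots> = (\<Sum>p\<in>{..l}. b (cls n (restr (chain n d l) {..<p})) * a (cls n (quot (chain n d l) {..<p})))"
    unfolding subreps_chain by (subst sum.reindex) (auto simp: inj_on_def)
  also have "\<dots> = (\<Sum>p\<le>l. b (cls n (chain n d p)) * a (cls n (chain n ((d + p) mod n) (l - p))))"
  proof (rule sum.cong[OF refl])
    fix p assume p: "p \<in> {..l}"
    have sp: "{..<p} \<in> subreps (chain n d l)" using p unfolding subreps_chain by auto
    have "cls n (quot (chain n d l) {..<p}) = cls n (chain n ((d + p) mod n) (l - p))"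
      using cls_eq[OF wf_quot[OF wc sp] wf_chain[OF n]] quot_chain_iso p by simp
    then show "b (cls n (restr (chain n d l) {..<p})) * a (cls n (quot (chain n d l) {..<p}))
      = b (cls n (chain n d p)) * a (cls n (chain n ((d + p) mod n) (l - p)))"
      by (simp add: restr_chain)
  qed
  finally show ?thesis .
qed



lemma arr_step_restr[simp]: "arr_step (restr R A) = arr_step R"
  by (simp add: arr_step_def fun_eq_iff)

lemma G_gen: assumes n: "n \<ge> 1" and w: "wf_rep n S" and G: "cls n S \<in> G n" shows "\<exists>t. gen S t"
proof -
  obtain d l where dl: "d < n" "1 \<le> l" "cls n S = cls n (chain n d l)" using G unfolding G_def by blast
  have "cls n S = cls n (chain n d l) \<longleftrightarrow> iso_rep S (chain n d l)" by (rule cls_eq[OF w wf_chain[OF n]])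
  then have "iso_rep S (chain n d l)" using dl(3) by blast
  then have "iso_rep (chain n d l) S" using iso_sym w by blast
  then show ?thesis using gen_iso[OF wf_chain[OF n] _ gen_chain_top[OF dl(2)]] by blast
qed

lemma compl_sub:
  assumes n: "n \<ge> 1" and wf: "wf_rep n R" and A: "A \<in> subreps R"
    and GA: "cls n (restr R A) \<in> G n" and GQ: "cls n (quot R A) \<in> G n"
    and nind: "\<not> indecomposable n R"
  shows "rcar R - A \<in> subreps R"
proof (rule ccontr)
  assume nsub: "rcar R - A \<notin> subreps R"
  have AR: "A \<subseteq> rcar R" and clA: "\<forall>x\<in>A. \<forall>y. rarr R x = Some y \<longrightarrow> y \<in> A"
    using A by (auto simp: subreps_def)
  obtain y z where y: "y \<in> rcar R" "y \<notin> A" and yz: "rarr R y = Some z" and zA: "z \<in> A"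
  proof -
    have "\<not> (\<forall>x\<in>rcar R - A. \<forall>y. rarr R x = Some y \<longrightarrow> y \<in> rcar R - A)"
      using nsub by (auto simp: subreps_def)
    then obtain x w where "x \<in> rcar R - A" "rarr R x = Some w" "w \<notin> rcar R - A" by blast
    moreover then have "w \<in> rcar R" using wf_arr[OF wf] by blast
    ultimately show ?thesis using that by blast
  qed
  obtain u where u: "gen (restr R A) u" using G_gen[OF n wf_restr[OF wf A] GA] by blast
  obtain t where t: "gen (quot R A) t" using G_gen[OF n wf_quot[OF wf A] GQ] by blast
  have uA: "u \<in> A" using u by (simp add: gen_def)
  have tR: "t \<in> rcar R" "t \<notin> A" using t by (auto simp: gen_def)
  have reachA: "\<exists>k. (arr_step R ^^ k) (Some u) = Some z'" if "z' \<in> A" for z'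
    using u that unfolding gen_def by simp
  have reachB: "\<exists>k. (arr_step R ^^ k) (Some t) = Some w" if "w \<in> rcar R - A" for w
  proof -
    have "\<exists>k. (arr_step (quot R A) ^^ k) (Some t) = Some w" using t that unfolding gen_def by simp
    then obtain k where k: "(arr_step (quot R A) ^^ k) (Some t) = Some w" by (elim exE)
    have "(arr_step R ^^ k) (Some t) = Some w"
      by (rule iter_sub[where Q="quot R A"]) (use k in \<open>auto simp: rarr_quot_Some\<close>)
    then show ?thesis by blast
  qed
  have zu: "z = u"
  proof -
    obtain i where i: "(arr_step R ^^ i) (Some u) = Some z" using reachA[OF zA] by (elim exE)
    show ?thesis
    proof (cases i)
      case 0 then show ?thesis using i by simp
    next
      case (Suc i')
      then obtain w where w: "(arr_step R ^^ i') (Some u) = Some w" "rarr R w = Some z"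
        using i by (cases "(arr_step R ^^ i') (Some u)") (auto simp: iter_Suc)
      have wA: "w \<in> A" using iter_closed[OF clA uA w(1)] .
      have "w = y" using wf wA AR y(1) w(2) yz unfolding wf_rep_def by (metis option.distinct(1) subsetD)
      then show ?thesis using wA y(2) by simp
    qed
  qed
  obtain k where k: "(arr_step R ^^ k) (Some t) = Some y" using reachB y by blast
  have ku: "(arr_step R ^^ Suc k) (Some t) = Some u" using k yz zu by (simp add: iter_Suc)
  have "gen R t"
    unfolding gen_def
  proof (intro conjI ballI)
    show "t \<in> rcar R" using tR by simp
    fix w assume w: "w \<in> rcar R"
    show "\<exists>k. (arr_step R ^^ k) (Some t) = Some w"
    proof (cases "w \<in> A")
      case False then show ?thesis using reachB w by blast
    next
      case True
      then obtain i where i: "(arr_step R ^^ i) (Some u) = Some w" using reachA by blast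
      have "(arr_step R ^^ (i + Suc k)) (Some t) = (arr_step R ^^ i) ((arr_step R ^^ Suc k) (Some t))"
        by (simp only: funpow_add comp_def)
      also have "\<dots> = Some w" using ku i by simp
      finally show ?thesis by blast
    qed
  qed
  then show False using gen_indec[OF wf] nind by blast
qed

lemma hmul_sym:
  assumes n: "n \<ge> 1" and ic: "C \<in> isoclasses n" and nG: "C \<notin> G n"
    and a: "\<And>C. a C \<noteq> 0 \<Longrightarrow> C \<in> G n" and b: "\<And>C. b C \<noteq> 0 \<Longrightarrow> C \<in> G n"
  shows "hmul n a b C = hmul n b a C"
proof -
  let ?R = "rep_of C"
  have wf: "wf_rep n ?R" using rep_of_cls[OF ic] by auto
  have nind: "\<not> indecomposable n ?R" using notG_rep[OF n ic nG] .
  let ?T = "{A \<in> subreps ?R. cls n (restr ?R A) \<in> G n \<and> cls n (quot ?R A) \<in> G n}"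
  have fin: "finite (subreps ?R)" using finite_subreps[OF wf] .
  have red: "(\<Sum>A\<in>subreps ?R. f (cls n (restr ?R A)) * g (cls n (quot ?R A)))
     = (\<Sum>A\<in>?T. f (cls n (restr ?R A)) * g (cls n (quot ?R A)))"
    if f: "\<And>C. f C \<noteq> 0 \<Longrightarrow> C \<in> G n" and g: "\<And>C. g C \<noteq> 0 \<Longrightarrow> C \<in> G n" for f g :: "qrep set \<Rightarrow> complex"
  proof (rule sum.mono_neutral_right[OF fin])
    show "?T \<subseteq> subreps ?R" by blast
    show "\<forall>A\<in>subreps ?R - ?T. f (cls n (restr ?R A)) * g (cls n (quot ?R A)) = 0"
      using f g by fastforce
  qed
  define cp where "cp A = rcar ?R - A" for A
  have cpT: "cp A \<in> ?T" and cpcp: "cp (cp A) = A"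
    and cr: "cls n (restr ?R (cp A)) = cls n (quot ?R A)" and cq: "cls n (quot ?R (cp A)) = cls n (restr ?R A)"
    if A: "A \<in> ?T" for A
  proof -
    have As: "A \<in> subreps ?R" using A by simp
    have AR: "A \<subseteq> rcar ?R" using As by (simp add: subreps_def)
    have sB: "cp A \<in> subreps ?R" unfolding cp_def using compl_sub[OF n wf As] A nind by simp
    have clB: "\<forall>x\<in>cp A. \<forall>y. rarr ?R x = Some y \<longrightarrow> y \<in> cp A" using sB by (simp add: subreps_def)
    have clA: "\<forall>x\<in>A. \<forall>y. rarr ?R x = Some y \<longrightarrow> y \<in> A" using As by (simp add: subreps_def)
    show cpcp: "cp (cp A) = A" using AR by (auto simp: cp_def)
    have i1: "iso_rep (restr ?R (cp A)) (quot ?R A)"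
      unfolding iso_rep_def
    proof (intro exI[of _ id] conjI)
      show "bij_betw id (rcar (restr ?R (cp A))) (rcar (quot ?R A))" by (simp add: cp_def)
      show "\<forall>x\<in>rcar (restr ?R (cp A)). rdeg (quot ?R A) (id x) = rdeg (restr ?R (cp A)) x \<and>
         rarr (quot ?R A) (id x) = map_option id (rarr (restr ?R (cp A)) x)"
      proof
        fix x assume x: "x \<in> rcar (restr ?R (cp A))"
        have "rarr (quot ?R A) x = rarr ?R x"
        proof (cases "rarr ?R x")
          case (Some y)
          then have "y \<in> cp A" using clB x by simp
          then have "y \<notin> A" by (simp add: cp_def)
          then show ?thesis using Some by (simp add: rarr_quot)
        qed (simp add: rarr_quot)
        then show "rdeg (quot ?R A) (id x) = rdeg (restr ?R (cp A)) x \<and>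
         rarr (quot ?R A) (id x) = map_option id (rarr (restr ?R (cp A)) x)" by (simp add: option.map_id)
      qed
    qed
    have i2: "iso_rep (quot ?R (cp A)) (restr ?R A)"
      unfolding iso_rep_def
    proof (intro exI[of _ id] conjI)
      show "bij_betw id (rcar (quot ?R (cp A))) (rcar (restr ?R A))" using AR by (simp add: cp_def Diff_Diff_Int Int_absorb1)
      show "\<forall>x\<in>rcar (quot ?R (cp A)). rdeg (restr ?R A) (id x) = rdeg (quot ?R (cp A)) x \<and>
         rarr (restr ?R A) (id x) = map_option id (rarr (quot ?R (cp A)) x)"
      proof
        fix x assume x: "x \<in> rcar (quot ?R (cp A))"
        then have xA: "x \<in> A" by (simp add: cp_def)
        have "rarr (quot ?R (cp A)) x = rarr ?R x"
        proof (cases "rarr ?R x")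
          case (Some y)
          then have "y \<in> A" using clA xA by simp
          then have "y \<notin> cp A" by (simp add: cp_def)
          then show ?thesis using Some by (simp add: rarr_quot)
        qed (simp add: rarr_quot)
        then show "rdeg (restr ?R A) (id x) = rdeg (quot ?R (cp A)) x \<and>
         rarr (restr ?R A) (id x) = map_option id (rarr (quot ?R (cp A)) x)" by (simp add: option.map_id)
      qed
    qed
    show cr: "cls n (restr ?R (cp A)) = cls n (quot ?R A)"
      using cls_eq[OF wf_restr[OF wf sB] wf_quot[OF wf As]] i1 by simp
    show cq: "cls n (quot ?R (cp A)) = cls n (restr ?R A)"
      using cls_eq[OF wf_quot[OF wf sB] wf_restr[OF wf As]] i2 by simp
    show "cp A \<in> ?T" using sB cr cq A by simp
  qed
  have "hmul n a b C = (\<Sum>A\<in>subreps ?R. b (cls n (restr ?R A)) * a (cls n (quot ?R A)))"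
    using ic by (simp add: hmul_def)
  also have "\<dots> = (\<Sum>A\<in>?T. b (cls n (restr ?R A)) * a (cls n (quot ?R A)))" using red[OF b a] .
  also have "\<dots> = (\<Sum>A\<in>?T. a (cls n (restr ?R A)) * b (cls n (quot ?R A)))"
  proof (rule sum.reindex_bij_witness[where i=cp and j=cp])
    fix A assume A: "A \<in> ?T"
    show "cp (cp A) = A" using cpcp[OF A] .
    show "cp A \<in> ?T" using cpT[OF A] .
    show "cp (cp A) = A" using cpcp[OF A] .
    show "cp A \<in> ?T" using cpT[OF A] .
    show "a (cls n (restr ?R (cp A))) * b (cls n (quot ?R (cp A))) = b (cls n (restr ?R A)) * a (cls n (quot ?R A))"
      using cr[OF A] cq[OF A] by (simp add: mult.commute)
  qed
  also have "\<dots> = (\<Sum>A\<in>subreps ?R. a (cls n (restr ?R A)) * b (cls n (quot ?R A)))" using red[OF a b] by simp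
  also have "\<dots> = hmul n b a C" using ic by (simp add: hmul_def)
  finally show ?thesis .
qed



definition Phi :: "nat \<Rightarrow> (nat \<Rightarrow> nat \<Rightarrow> nat \<Rightarrow> complex) \<Rightarrow> qrep set \<Rightarrow> complex" where
  "Phi n x = (\<lambda>C. if C \<in> G n then
     (let p = (SOME p. fst p < n \<and> 1 \<le> snd p \<and> C = cls n (chain n (fst p) (snd p)))
      in x ((fst p + snd p) div n) (fst p) ((fst p + snd p) mod n)) else 0)"

lemma chain_cls_inj: assumes n: "n \<ge> 1" and "d < n" "d' < n" "1 \<le> l"
   and eq: "cls n (chain n d l) = cls n (chain n d' l')"
  shows "d = d' \<and> l = l'"
proof -
  have "iso_rep (chain n d l) (chain n d' l')" using cls_eq[OF wf_chain[OF n] wf_chain[OF n]] eq by simp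
  then show ?thesis using chain_iso_eq assms by blast
qed

lemma Phi_chain: assumes n: "n \<ge> 1" and d: "d < n" and l: "1 \<le> l"
  shows "Phi n x (cls n (chain n d l)) = x ((d + l) div n) d ((d + l) mod n)"
proof -
  let ?C = "cls n (chain n d l)"
  have G: "?C \<in> G n" using d l unfolding G_def by blast
  let ?P = "\<lambda>p. fst p < n \<and> 1 \<le> snd p \<and> ?C = cls n (chain n (fst p) (snd p))"
  have "?P (d, l)" using d l by simp
  then have q: "?P (SOME p. ?P p)" by (rule someI)
  define q where "q = (SOME p. ?P p)"
  have q1: "fst q < n" and q3: "?C = cls n (chain n (fst q) (snd q))" using q by (simp_all add: q_def)
  have "d = fst q \<and> l = snd q" by (rule chain_cls_inj[OF n d q1 l q3])
  then have "(SOME p. ?P p) = (d, l)" unfolding q_def[symmetric] by (simp add: prod_eq_iff)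
  then show ?thesis using G by (simp add: Phi_def)
qed

lemma Phi_notG: "C \<notin> G n \<Longrightarrow> Phi n x C = 0"
  by (simp add: Phi_def)

lemma Phi_G: assumes "C \<in> G n" obtains d l where "d < n" "1 \<le> l" "C = cls n (chain n d l)"
  using assms unfolding G_def by blast

lemma Phi_add: "Phi n (\<lambda>m r s. x m r s + y m r s) = (\<lambda>C. Phi n x C + Phi n y C)"
  by (simp add: Phi_def fun_eq_iff Let_def)

lemma Phi_smult: "Phi n (\<lambda>m r s. c * x m r s) = (\<lambda>C. c * Phi n x C)"
  by (simp add: Phi_def fun_eq_iff Let_def)

definition valid :: "nat \<Rightarrow> nat \<Rightarrow> nat \<Rightarrow> nat \<Rightarrow> bool" where
  "valid n m r s \<longleftrightarrow> r < n \<and> s < n \<and> (1 \<le> m \<or> r < s)"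

definition K :: "nat \<Rightarrow> nat \<Rightarrow> nat \<Rightarrow> nat \<Rightarrow> qrep set" where
  "K n m r s = cls n (chain n r (m * n + s - r))"

lemma valid_arith: assumes "valid n m r s"
  shows "1 \<le> m * n + s - r" "r + (m * n + s - r) = m * n + s"
    "(r + (m * n + s - r)) div n = m" "(r + (m * n + s - r)) mod n = s"
proof -
  have r: "r < n" and s: "s < n" and c: "1 \<le> m \<or> r < s" using assms by (auto simp: valid_def)
  have "r < m * n + s"
  proof (cases "1 \<le> m")
    case True then have "n \<le> m * n" by simp
    then show ?thesis using r by linarith
  next
    case False then show ?thesis using c by simp
  qed
  then show "1 \<le> m * n + s - r" "r + (m * n + s - r) = m * n + s" by auto
  then show "(r + (m * n + s - r)) div n = m" "(r + (m * n + s - r)) mod n = s" using s by auto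
qed

lemma Phi_K: assumes n: "n \<ge> 1" and v: "valid n m r s" shows "Phi n x (K n m r s) = x m r s"
proof -
  have r: "r < n" using v by (simp add: valid_def)
  show ?thesis unfolding K_def using Phi_chain[OF n r valid_arith(1)[OF v]] valid_arith[OF v] by simp
qed

lemma K_G: assumes "valid n m r s" shows "K n m r s \<in> G n"
  using valid_arith(1)[OF assms] assms unfolding K_def G_def valid_def by blast

lemma chain_valid: assumes n: "n \<ge> 1" and d: "d < n" and l: "1 \<le> l"
  shows "valid n ((d + l) div n) d ((d + l) mod n)"
    "K n ((d + l) div n) d ((d + l) mod n) = cls n (chain n d l)"
proof -
  show "valid n ((d + l) div n) d ((d + l) mod n)"
    unfolding valid_def
  proof (intro conjI)
    show "d < n" by (rule d)
    show "(d + l) mod n < n" using n by simp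
    show "1 \<le> (d + l) div n \<or> d < (d + l) mod n"
    proof (cases "d + l < n")
      case True then show ?thesis using l by simp
    next
      case False then have "0 < (d + l) div n" using n by (simp add: div_greater_zero_iff)
      then show ?thesis by simp
    qed
  qed
  have "(d + l) div n * n + (d + l) mod n - d = l" by simp
  then show "K n ((d + l) div n) d ((d + l) mod n) = cls n (chain n d l)" unfolding K_def by simp
qed

lemma K_inj: assumes n: "n \<ge> 1" and v: "valid n m r s" and v': "valid n m' r' s'"
  and eq: "K n m r s = K n m' r' s'" shows "m = m' \<and> r = r' \<and> s = s'"
proof -
  have r: "r < n" "r' < n" using v v' by (auto simp: valid_def)
  have e: "r = r' \<and> m * n + s - r = m' * n + s' - r'"
    using chain_cls_inj[OF n r(1) r(2) valid_arith(1)[OF v]] eq unfolding K_def by blast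
  then have e1: "r = r'" and e2: "m * n + s - r = m' * n + s' - r'" by blast+
  have a1: "r + (m * n + s - r) = m * n + s" by (rule valid_arith(2)[OF v])
  have a2: "r' + (m' * n + s' - r') = m' * n + s'" by (rule valid_arith(2)[OF v'])
  have e3: "m * n + s = m' * n + s'" using a1 a2 e1 e2 by linarith
  have s: "s < n" "s' < n" using v v' by (auto simp: valid_def)
  have n0: "n \<noteq> 0" using n by simp
  have "(m * n + s) div n = m" "(m * n + s) mod n = s" using s(1) n0 by simp_all
  moreover have "(m' * n + s') div n = m'" "(m' * n + s') mod n = s'" using s(2) n0 by simp_all
  ultimately show ?thesis using e1 e3 by metis
qed

lemma aplus_valid: "x \<in> aplus n \<Longrightarrow> x m r s \<noteq> 0 \<Longrightarrow> valid n m r s"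
  by (auto simp: aplus_def valid_def)

lemma G_K: assumes n: "n \<ge> 1" and C: "C \<in> G n" obtains m r s where "valid n m r s" "C = K n m r s"
proof -
  obtain d l where dl: "d < n" "1 \<le> l" "C = cls n (chain n d l)" using C unfolding G_def by blast
  show ?thesis using that chain_valid[OF n dl(1,2)] dl(3) by metis
qed

lemma Phi_supp: "Phi n x C \<noteq> 0 \<Longrightarrow> C \<in> G n"
  using Phi_notG by blast

lemma Phi_nQ: assumes n: "n \<ge> 1" and x: "x \<in> aplus n" shows "Phi n x \<in> nQ n"
proof -
  let ?M = "{m. \<exists>r s. x m r s \<noteq> 0}"
  have finM: "finite ?M" using x by (simp add: aplus_def)
  have sub: "{C. Phi n x C \<noteq> 0} \<subseteq> (\<lambda>(m, r, s). K n m r s) ` (?M \<times> {..<n} \<times> {..<n})"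
  proof
    fix C assume C: "C \<in> {C. Phi n x C \<noteq> 0}"
    then have "C \<in> G n" using Phi_supp by blast
    then obtain m r s where v: "valid n m r s" and CK: "C = K n m r s" using G_K[OF n] by blast
    have "x m r s \<noteq> 0" using C CK Phi_K[OF n v] by simp
    then have "(m, r, s) \<in> ?M \<times> {..<n} \<times> {..<n}" using v by (auto simp: valid_def)
    then show "C \<in> (\<lambda>(m, r, s). K n m r s) ` (?M \<times> {..<n} \<times> {..<n})" using CK by force
  qed
  have "finite {C. Phi n x C \<noteq> 0}" by (rule finite_subset[OF sub]) (use finM in simp)
  moreover have "\<forall>C. Phi n x C \<noteq> 0 \<longrightarrow> C \<in> isoclasses n" using Phi_supp G_iso[OF n] by blast
  ultimately have "Phi n x \<in> hall n" by (simp add: hall_def)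
  then show ?thesis using nQ_char[OF n] Phi_supp by blast
qed

lemma Phi_inj: assumes n: "n \<ge> 1" shows "inj_on (Phi n) (aplus n)"
proof (rule inj_onI)
  fix x y assume x: "x \<in> aplus n" and y: "y \<in> aplus n" and eq: "Phi n x = Phi n y"
  show "x = y"
  proof (intro ext)
    fix m r s
    show "x m r s = y m r s"
    proof (cases "valid n m r s")
      case True
      then show ?thesis using Phi_K[OF n True, of x] Phi_K[OF n True, of y] eq by simp
    next
      case False
      then show ?thesis using aplus_valid[OF x] aplus_valid[OF y] by metis
    qed
  qed
qed

lemma Phi_surj: assumes n: "n \<ge> 1" and z: "z \<in> nQ n" shows "\<exists>x\<in>aplus n. Phi n x = z"
proof -
  have zh: "z \<in> hall n" and zG: "\<And>C. z C \<noteq> 0 \<Longrightarrow> C \<in> G n" using nQ_char[OF n] z by auto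
  have finz: "finite {C. z C \<noteq> 0}" using zh by (simp add: hall_def)
  define x where "x m r s = (if valid n m r s then z (K n m r s) else 0)" for m r s
  let ?S = "{(m, r, s). valid n m r s \<and> z (K n m r s) \<noteq> 0}"
  have inj: "inj_on (\<lambda>(m, r, s). K n m r s) ?S"
    by (rule inj_onI) (use K_inj[OF n] in auto)
  have "(\<lambda>(m, r, s). K n m r s) ` ?S \<subseteq> {C. z C \<noteq> 0}" by auto
  then have "finite ((\<lambda>(m, r, s). K n m r s) ` ?S)" using finz finite_subset by blast
  then have finS: "finite ?S" using finite_imageD inj by blast
  have "{m. \<exists>r s. x m r s \<noteq> 0} \<subseteq> fst ` ?S"
  proof
    fix m assume "m \<in> {m. \<exists>r s. x m r s \<noteq> 0}"
    then obtain r s where "x m r s \<noteq> 0" by blast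
    then have "(m, r, s) \<in> ?S" by (auto simp: x_def split: if_splits)
    then show "m \<in> fst ` ?S" by force
  qed
  then have "finite {m. \<exists>r s. x m r s \<noteq> 0}" using finS finite_subset by blast
  then have xa: "x \<in> aplus n" unfolding aplus_def by (auto simp: x_def valid_def split: if_splits)
  have "Phi n x = z"
  proof
    fix C show "Phi n x C = z C"
    proof (cases "C \<in> G n")
      case True
      then obtain m r s where v: "valid n m r s" and CK: "C = K n m r s" using G_K[OF n] by blast
      then show ?thesis using Phi_K[OF n v] by (simp add: x_def)
    next
      case False
      then show ?thesis using Phi_notG zG by metis
    qed
  qed
  then show ?thesis using xa by blast
qed

lemma Phi_Ebasis: assumes n: "n \<ge> 1" and v: "valid n m r s"
  shows "Phi n (Ebasis r s m) = delta (K n m r s)"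
proof
  fix C show "Phi n (Ebasis r s m) C = delta (K n m r s) C"
  proof (cases "C \<in> G n")
    case True
    then obtain m' r' s' where v': "valid n m' r' s'" and CK: "C = K n m' r' s'" using G_K[OF n] by blast
    have "Phi n (Ebasis r s m) C = (if m' = m \<and> r' = r \<and> s' = s then 1 else 0)"
      using Phi_K[OF n v'] CK by (simp add: Ebasis_def)
    also have "\<dots> = delta (K n m r s) C"
      using K_inj[OF n v' v] CK by (auto simp: delta_def)
    finally show ?thesis .
  next
    case False
    then have "C \<noteq> K n m r s" using K_G[OF v] by blast
    then show ?thesis using Phi_notG[OF False] by (simp add: delta_def)
  qed
qed

lemma Ebasis_aplus: "valid n m r s \<Longrightarrow> Ebasis r s m \<in> aplus n"
proof -
  assume v: "valid n m r s"
  have "{m'. \<exists>r' s'. Ebasis r s m m' r' s' \<noteq> 0} \<subseteq> {m}" by (auto simp: Ebasis_def)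
  then have "finite {m'. \<exists>r' s'. Ebasis r s m m' r' s' \<noteq> 0}" using finite_subset by blast
  then show ?thesis using v unfolding aplus_def valid_def by (auto simp: Ebasis_def)
qed

lemma aplus_basis_eq: "aplus_basis n = {Ebasis r s m | r s m. valid n m r s}"
  by (auto simp: aplus_basis_def valid_def)

lemma basis_bij: assumes n: "n \<ge> 1" shows "bij_betw (Phi n) (aplus_basis n) (indec_basis n)"
  unfolding bij_betw_def
proof
  have "aplus_basis n \<subseteq> aplus n" unfolding aplus_basis_eq using Ebasis_aplus by blast
  then show "inj_on (Phi n) (aplus_basis n)" using Phi_inj[OF n] inj_on_subset by blast
  have ib: "indec_basis n = {delta C | C. C \<in> G n}"
  proof
    show "indec_basis n \<subseteq> {delta C | C. C \<in> G n}"
    proof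
      fix D assume "D \<in> indec_basis n"
      then obtain R where R: "indecomposable n R" "D = delta (cls n R)" unfolding indec_basis_def by blast
      then have "cls n R \<in> G n" using G_char[OF n] by blast
      then show "D \<in> {delta C | C. C \<in> G n}" using R(2) by blast
    qed
    show "{delta C | C. C \<in> G n} \<subseteq> indec_basis n"
    proof
      fix D assume "D \<in> {delta C | C. C \<in> G n}"
      then obtain C where C: "C \<in> G n" "D = delta C" by blast
      then obtain R where R: "indecomposable n R" "C = cls n R" using G_char[OF n] by blast
      then show "D \<in> indec_basis n" using C(2) unfolding indec_basis_def by blast
    qed
  qed
  show "Phi n ` aplus_basis n = indec_basis n"
    unfolding ib aplus_basis_eq
  proof
    show "Phi n ` {Ebasis r s m |r s m. valid n m r s} \<subseteq> {delta C |C. C \<in> G n}"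
      using Phi_Ebasis[OF n] K_G by blast
    show "{delta C |C. C \<in> G n} \<subseteq> Phi n ` {Ebasis r s m |r s m. valid n m r s}"
    proof
      fix D assume "D \<in> {delta C |C. C \<in> G n}"
      then obtain C where C: "C \<in> G n" "D = delta C" by blast
      then obtain m r s where v: "valid n m r s" and CK: "C = K n m r s" using G_K[OF n] by blast
      then have "D = Phi n (Ebasis r s m)" using Phi_Ebasis[OF n v] C by simp
      then show "D \<in> Phi n ` {Ebasis r s m |r s m. valid n m r s}" using v by blast
    qed
  qed
qed



lemma chain0_notG: assumes n: "n \<ge> 1" shows "cls n (chain n e 0) \<notin> G n"
proof -
  have "cls n (chain n e 0) = cls n zero_rep" using cls_zero_iff[OF wf_chain[OF n]] by simp
  then show ?thesis using zero_notG[OF n] by simp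
qed

lemma arith_top: assumes n: "n \<ge> 1" and PT: "(P::nat) \<le> T"
  shows "(P mod n + (T - P)) div n = T div n - P div n" "(P mod n + (T - P)) mod n = T mod n"
proof -
  have P: "P = P div n * n + P mod n" by simp
  have T: "T = T div n * n + T mod n" by simp
  have q: "P div n \<le> T div n" using PT by (rule div_le_mono)
  have B: "P div n * n \<le> T div n * n" using q by simp
  have D: "(T div n - P div n) * n = T div n * n - P div n * n" by (simp add: diff_mult_distrib)
  have E: "P mod n + (T - P) = (T div n - P div n) * n + T mod n" using P T B D PT by linarith
  have tm: "T mod n < n" using n by simp
  show "(P mod n + (T - P)) div n = T div n - P div n" unfolding E using tm by simp
  show "(P mod n + (T - P)) mod n = T mod n" unfolding E using tm by simp
qed

lemma double_sum: "(\<Sum>a<M. \<Sum>k<(n::nat). f (a * n + k)) = (\<Sum>P<M * n. f P)"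
proof -
  have "sum f {a * n..<a * n + n} = (\<Sum>k<n. f (a * n + k))" for a
    by (rule sum.reindex_bij_witness[where j="\<lambda>P. P - a * n" and i="\<lambda>k. a * n + k"]) auto
  then have "(\<Sum>a<M. \<Sum>k<n. f (a * n + k)) = (\<Sum>a<M. sum f {a * n..<a * n + n})" by simp
  also have "\<dots> = sum f {..<M * n}" by (rule sum.nat_group)
  finally show ?thesis .
qed

lemma reflect_sum: "(\<Sum>a\<le>(m::nat). f (m - a) a) = (\<Sum>a\<le>m. f a (m - a))"
  by (rule sum.reindex_bij_witness[where i="\<lambda>a. m - a" and j="\<lambda>a. m - a"]) auto

lemma split_sum:
  assumes n: "n \<ge> 1" and d: "d < n" and l: "1 \<le> l" and u: "u \<in> aplus n" and v: "v \<in> aplus n"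
  shows "(\<Sum>p\<le>l. Phi n u (cls n (chain n d p)) * Phi n v (cls n (chain n ((d + p) mod n) (l - p))))
     = (\<Sum>a\<le>(d + l) div n. \<Sum>k<n. u a d k * v ((d + l) div n - a) k ((d + l) mod n))"
proof -
  define m where "m = (d + l) div n"
  define s where "s = (d + l) mod n"
  have n0: "n \<noteq> 0" using n by simp
  have sn: "s < n" using n0 by (simp add: s_def)
  have dl: "d + l = m * n + s" by (simp add: m_def s_def)
  define g where "g P = u (P div n) d (P mod n) * v (m - P div n) (P mod n) s" for P
  have tm: "Phi n u (cls n (chain n d p)) * Phi n v (cls n (chain n ((d + p) mod n) (l - p)))
     = (if 1 \<le> p \<and> p < l then g (d + p) else 0)" if p: "p \<le> l" for p
  proof (cases "1 \<le> p \<and> p < l")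
    case True
    have a1: "Phi n u (cls n (chain n d p)) = u ((d + p) div n) d ((d + p) mod n)"
      using Phi_chain[OF n d] True by simp
    have dpn: "(d + p) mod n < n" using n0 by simp
    have lp: "1 \<le> l - p" using True by linarith
    have a2: "Phi n v (cls n (chain n ((d + p) mod n) (l - p)))
       = v (((d + p) mod n + (l - p)) div n) ((d + p) mod n) (((d + p) mod n + (l - p)) mod n)"
      by (rule Phi_chain[OF n dpn lp])
    have eq: "l - p = (d + l) - (d + p)" by simp
    have "((d + p) mod n + (l - p)) div n = m - (d + p) div n"
      unfolding eq m_def using arith_top(1)[OF n, of "d + p" "d + l"] p by simp
    moreover have "((d + p) mod n + (l - p)) mod n = s"
      unfolding eq s_def using arith_top(2)[OF n, of "d + p" "d + l"] p by simp
    ultimately show ?thesis using a1 a2 True by (simp add: g_def)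
  next
    case False
    then have "p = 0 \<or> p = l" using p by auto
    then show ?thesis
    proof
      assume "p = 0"
      then show ?thesis using Phi_notG[OF chain0_notG[OF n]] by simp
    next
      assume "p = l"
      then show ?thesis using Phi_notG[OF chain0_notG[OF n]] False by simp
    qed
  qed
  have "(\<Sum>p\<le>l. Phi n u (cls n (chain n d p)) * Phi n v (cls n (chain n ((d + p) mod n) (l - p))))
     = (\<Sum>p\<in>{..l}. if 1 \<le> p \<and> p < l then g (d + p) else 0)"
    by (rule sum.cong[OF refl]) (simp add: tm)
  also have "\<dots> = (\<Sum>p\<in>{p \<in> {..l}. 1 \<le> p \<and> p < l}. g (d + p))"
    by (simp only: sum.inter_filter[OF finite_atMost])
  also have "{p \<in> {..l}. 1 \<le> p \<and> p < l} = {1..<l}" by auto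
  also have "(\<Sum>p\<in>{1..<l}. g (d + p)) = (\<Sum>P\<in>{1 + d..<l + d}. g P)"
  proof -
    have e: "(\<lambda>p. g (d + p)) = (\<lambda>p. g (p + d))" by (simp add: add.commute)
    show ?thesis unfolding e by (rule sum.shift_bounds_nat_ivl[symmetric])
  qed
  also have "\<dots> = (\<Sum>P<Suc m * n. g P)"
  proof (rule sum.mono_neutral_left)
    show "finite {..<Suc m * n}" by simp
    show "{1 + d..<l + d} \<subseteq> {..<Suc m * n}" using dl sn by auto
    show "\<forall>P\<in>{..<Suc m * n} - {1 + d..<l + d}. g P = 0"
    proof
      fix P assume P: "P \<in> {..<Suc m * n} - {1 + d..<l + d}"
      then have P1: "P < Suc m * n" and P2: "P \<le> d \<or> d + l \<le> P" by auto
      from P2 show "g P = 0"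
      proof
        assume Pd: "P \<le> d"
        then have "P div n = 0" "P mod n = P" using d by auto
        moreover have "u 0 d P = 0"
        proof (rule ccontr)
          assume "u 0 d P \<noteq> 0"
          then have "valid n 0 d P" using aplus_valid[OF u] by blast
          then show False using Pd by (simp add: valid_def)
        qed
        ultimately show "g P = 0" by (simp add: g_def)
      next
        assume Pl: "d + l \<le> P"
        have "m * n \<le> P" using Pl dl by simp
        then have dv: "P div n = m" using P1 by (intro div_nat_eqI) (auto simp: mult.commute)
        have "P mod n = P - m * n" using dv by (simp add: minus_div_mult_eq_mod[symmetric])
        then have km: "s \<le> P mod n" using Pl dl by simp
        have "v 0 (P mod n) s = 0"
        proof (rule ccontr)
          assume "v 0 (P mod n) s \<noteq> 0"
          then have "valid n 0 (P mod n) s" using aplus_valid[OF v] by blast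
          then show False using km by (simp add: valid_def)
        qed
        then show "g P = 0" using dv by (simp add: g_def)
      qed
    qed
  qed
  also have "\<dots> = (\<Sum>a<Suc m. \<Sum>k<n. g (a * n + k))" by (rule double_sum[symmetric])
  also have "\<dots> = (\<Sum>a\<le>m. \<Sum>k<n. u a d k * v (m - a) k s)"
    unfolding lessThan_Suc_atMost
    by (rule sum.cong[OF refl], rule sum.cong[OF refl]) (simp add: g_def n0)
  finally show ?thesis by (simp add: m_def s_def)
qed

lemma bracket:
  assumes n: "n \<ge> 1" and x: "x \<in> aplus n" and y: "y \<in> aplus n"
  shows "Phi n (abr n x y) = hbr n (Phi n y) (Phi n x)"
proof
  fix C
  show "Phi n (abr n x y) C = hbr n (Phi n y) (Phi n x) C"
  proof (cases "C \<in> G n")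
    case True
    then obtain d l where dl: "d < n" "1 \<le> l" "C = cls n (chain n d l)" unfolding G_def by blast
    define m where "m = (d + l) div n"
    define s where "s = (d + l) mod n"
    have "Phi n (abr n x y) C = abr n x y m d s" using Phi_chain[OF n dl(1,2)] dl(3) by (simp add: m_def s_def)
    also have "\<dots> = (\<Sum>a\<le>m. \<Sum>k<n. x a d k * y (m - a) k s) - (\<Sum>a\<le>m. \<Sum>k<n. y (m - a) d k * x a k s)"
      by (simp add: abr_def sum_subtractf)
    also have "(\<Sum>a\<le>m. \<Sum>k<n. y (m - a) d k * x a k s) = (\<Sum>a\<le>m. \<Sum>k<n. y a d k * x (m - a) k s)"
      using reflect_sum[of "\<lambda>b a. \<Sum>k<n. y b d k * x a k s" m] by simp
    also have "(\<Sum>a\<le>m. \<Sum>k<n. x a d k * y (m - a) k s)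
        = (\<Sum>p\<le>l. Phi n x (cls n (chain n d p)) * Phi n y (cls n (chain n ((d + p) mod n) (l - p))))"
      using split_sum[OF n dl(1,2) x y] by (simp add: m_def s_def)
    also have "(\<Sum>a\<le>m. \<Sum>k<n. y a d k * x (m - a) k s)
        = (\<Sum>p\<le>l. Phi n y (cls n (chain n d p)) * Phi n x (cls n (chain n ((d + p) mod n) (l - p))))"
      using split_sum[OF n dl(1,2) y x] by (simp add: m_def s_def)
    also have "(\<Sum>p\<le>l. Phi n x (cls n (chain n d p)) * Phi n y (cls n (chain n ((d + p) mod n) (l - p))))
       - (\<Sum>p\<le>l. Phi n y (cls n (chain n d p)) * Phi n x (cls n (chain n ((d + p) mod n) (l - p))))
       = hbr n (Phi n y) (Phi n x) C"
      unfolding hbr_def dl(3) hmul_chain[OF n] by simp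
    finally show ?thesis .
  next
    case False
    have l: "Phi n (abr n x y) C = 0" using Phi_notG[OF False] .
    show ?thesis
    proof (cases "C \<in> isoclasses n")
      case True
      have "hmul n (Phi n y) (Phi n x) C = hmul n (Phi n x) (Phi n y) C"
        by (rule hmul_sym[OF n True False]) (use Phi_supp in blast)+
      then show ?thesis using l by (simp add: hbr_def)
    next
      case False
      then show ?thesis using l by (simp add: hbr_def hmul_def)
    qed
  qed
qed


theorem mainTheorem16:
  fixes n :: nat
  assumes "n \<ge> 2"
  shows "\<exists>\<phi>. bij_betw \<phi> (aplus n) (nQ n) \<and>
     (\<forall>x\<in>aplus n. \<forall>y\<in>aplus n.
        \<phi> (\<lambda>m r s. x m r s + y m r s) = (\<lambda>C. \<phi> x C + \<phi> y C)) \<and>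
     (\<forall>x\<in>aplus n. \<forall>c::complex. \<phi> (\<lambda>m r s. c * x m r s) = (\<lambda>C. c * \<phi> x C)) \<and>
     (\<forall>x\<in>aplus n. \<forall>y\<in>aplus n. \<phi> (abr n x y) = hbr n (\<phi> y) (\<phi> x)) \<and>
     bij_betw \<phi> (aplus_basis n) (indec_basis n)"
proof -
  have n: "n \<ge> 1" using assms by simp
  have "bij_betw (Phi n) (aplus n) (nQ n)"
    unfolding bij_betw_def
  proof
    show "inj_on (Phi n) (aplus n)" by (rule Phi_inj[OF n])
    show "Phi n ` aplus n = nQ n"
    proof
      show "Phi n ` aplus n \<subseteq> nQ n" using Phi_nQ[OF n] by blast
      show "nQ n \<subseteq> Phi n ` aplus n"
      proof
        fix z assume "z \<in> nQ n"
        then obtain x where "x \<in> aplus n" "Phi n x = z" using Phi_surj[OF n] by blast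
        then show "z \<in> Phi n ` aplus n" by blast
      qed
    qed
  qed
  moreover have "\<forall>x\<in>aplus n. \<forall>y\<in>aplus n.
        Phi n (\<lambda>m r s. x m r s + y m r s) = (\<lambda>C. Phi n x C + Phi n y C)" by (simp add: Phi_add)
  moreover have "\<forall>x\<in>aplus n. \<forall>c::complex. Phi n (\<lambda>m r s. c * x m r s) = (\<lambda>C. c * Phi n x C)"
    by (simp add: Phi_smult)
  moreover have "\<forall>x\<in>aplus n. \<forall>y\<in>aplus n. Phi n (abr n x y) = hbr n (Phi n y) (Phi n x)"
    using bracket[OF n] by blast
  moreover have "bij_betw (Phi n) (aplus_basis n) (indec_basis n)" by (rule basis_bij[OF n])
  ultimately show ?thesis by blast
qed

end
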